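(* Let $\beta\in(0,1/2)$, $N=2^n$, $\delta_N=2^{-N^\beta}$. Let $(U,V,X,Z)$ be random variables with $U,V\in\{0,1\}$ and $X,Z$ taking values in finite alphabets $\mathcal X,\mathcal Z$, and let $P=P_{U^NV^NX^NZ^N}$ be the distribution of $N$ i.i.d. copies of $(U,V,X,Z)$. Put $T^N=V^NG_N$ and $$\mathcal H_{V|U,Z}=\{i\in[N]:\ Z(T_i\mid T^{i-1},U^N,Z^N)\ge 1-\delta_N\},$$ computed under $P$. Let $Q$ be any distribution on $\{0,1\}^N\times\{0,1\}^N\times\mathcal X^N\times\mathcal Z^N$ of $(U^N,V^N,X^N,Z^N)$ with $\|P-Q\|_1\le 2N2^{-N^\beta}$, and under $Q$ set $T^N=V^NG_N$. Let $\mathcal I\subseteq\mathcal H_{V|U,Z}$ and $\mathcal A\subseteq\mathcal I$, and write $T[\mathcal S]=(T_i)_{i\in\mathcal S}$. Then, with mutual information computed under $Q$, $$I\big(T[\mathcal I\setminus\mathcal A];\,T[\mathcal A],U^N,Z^N\big)=O\big(N^3 2^{-N^\beta}\big),$$ with implied constant depending only on $|\mathcal Z|$ (for all sufficiently large $N$).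
   Context: $G_N=B_NF^{\otimes n}$ is Arıkan's polarizing matrix over $\mathbb F_2$: $F=\begin{pmatrix}1&0\\1&1\end{pmatrix}$, $\otimes$ is the Kronecker product and $B_N$ is the bit-reversal permutation matrix. For a binary random variable $A$ and a discrete random variable $B$, $Z(A\mid B)=2\sum_b P_B(b)\sqrt{P_{A|B}(0|b)P_{A|B}(1|b)}$. $T^{i-1}=(T_1,\dots,T_{i-1})$, $[N]=\{1,\dots,N\}$, $\|\cdot\|_1$ is the $\ell_1$ distance between distributions, logarithms are base 2. *)

theory Defs
  imports Complex_Main "HOL-Library.FuncSet"
begin

section \<open>Arikan's polarizing matrix over F_2 (bool: False = 0, True = 1, \<and> = product)\<close>

text \<open>Matrices are boolean functions on index pairs (0-indexed).\<close>

definition arikanF :: "nat \<Rightarrow> nat \<Rightarrow> bool" where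
  "arikanF i j = ((i, j) \<in> {(0,0), (1,0), (1,1)})"

definition kron2 :: "nat \<Rightarrow> (nat \<Rightarrow> nat \<Rightarrow> bool) \<Rightarrow> (nat \<Rightarrow> nat \<Rightarrow> bool) \<Rightarrow> nat \<Rightarrow> nat \<Rightarrow> bool" where
  "kron2 m A B i j = (A (i div m) (j div m) \<and> B (i mod m) (j mod m))"

fun Fpow :: "nat \<Rightarrow> nat \<Rightarrow> nat \<Rightarrow> bool" where
  "Fpow 0 = (\<lambda>i j. True)"
| "Fpow (Suc n) = kron2 (2 ^ n) arikanF (Fpow n)"

definition bitrev :: "nat \<Rightarrow> nat \<Rightarrow> nat" where
  "bitrev n i = (\<Sum>k<n. if odd (i div 2 ^ k) then 2 ^ (n - 1 - k) else 0)"

definition Bperm :: "nat \<Rightarrow> nat \<Rightarrow> nat \<Rightarrow> bool" where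
  "Bperm n i j = (j = bitrev n i)"

text \<open>G_N = B_N F^{\<otimes>n}, product over F_2.\<close>
definition GN :: "nat \<Rightarrow> nat \<Rightarrow> nat \<Rightarrow> bool" where
  "GN n i j = odd (card {k. k < 2 ^ n \<and> Bperm n i k \<and> Fpow n k j})"

text \<open>Row vector times G_N over F_2: T = v G_N, component j.\<close>
definition polar :: "nat \<Rightarrow> bool list \<Rightarrow> nat \<Rightarrow> bool" where
  "polar n v j = odd (card {i. i < 2 ^ n \<and> v ! i \<and> GN n i j})"

definition prb :: "('o \<Rightarrow> real) \<Rightarrow> 'o set \<Rightarrow> ('o \<Rightarrow> bool) \<Rightarrow> real" where
  "prb Q S E = (\<Sum>\<omega>\<in>{\<omega>\<in>S. E \<omega>}. Q \<omega>)"

definition bhatt :: "('o \<Rightarrow> real) \<Rightarrow> 'o set \<Rightarrow> ('o \<Rightarrow> bool) \<Rightarrow> ('o \<Rightarrow> 'b) \<Rightarrow> real" where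
  "bhatt Q S A B = 2 * (\<Sum>b\<in>B ` S.
      prb Q S (\<lambda>\<omega>. B \<omega> = b) *
      sqrt ((prb Q S (\<lambda>\<omega>. A \<omega> = False \<and> B \<omega> = b) / prb Q S (\<lambda>\<omega>. B \<omega> = b)) *
            (prb Q S (\<lambda>\<omega>. A \<omega> = True \<and> B \<omega> = b) / prb Q S (\<lambda>\<omega>. B \<omega> = b))))"

text \<open>Mutual information (base 2; terms with zero joint mass contribute 0).\<close>
definition mutinf :: "('o \<Rightarrow> real) \<Rightarrow> 'o set \<Rightarrow> ('o \<Rightarrow> 'a) \<Rightarrow> ('o \<Rightarrow> 'b) \<Rightarrow> real" where
  "mutinf Q S A B = (\<Sum>a\<in>A ` S. \<Sum>b\<in>B ` S.
      prb Q S (\<lambda>\<omega>. A \<omega> = a \<and> B \<omega> = b) *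
      log 2 (prb Q S (\<lambda>\<omega>. A \<omega> = a \<and> B \<omega> = b) /
             (prb Q S (\<lambda>\<omega>. A \<omega> = a) * prb Q S (\<lambda>\<omega>. B \<omega> = b))))"

text \<open>Outcomes: length-N words over the alphabet bool x bool x X x Z
  (equivalently the tuple (U^N, V^N, X^N, Z^N)).\<close>
definition outcomes :: "nat \<Rightarrow> 'x set \<Rightarrow> 'z set \<Rightarrow> (bool \<times> bool \<times> 'x \<times> 'z) list set" where
  "outcomes N X Z = {\<omega>. length \<omega> = N \<and> set \<omega> \<subseteq> UNIV \<times> UNIV \<times> X \<times> Z}"

definition iid :: "('o \<Rightarrow> real) \<Rightarrow> 'o list \<Rightarrow> real" where
  "iid p \<omega> = prod_list (map p \<omega>)"

definition Uv :: "(bool \<times> bool \<times> 'x \<times> 'z) list \<Rightarrow> bool list" where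
  "Uv \<omega> = map fst \<omega>"
definition Vv :: "(bool \<times> bool \<times> 'x \<times> 'z) list \<Rightarrow> bool list" where
  "Vv \<omega> = map (\<lambda>(u, v, x, z). v) \<omega>"
definition Zv :: "(bool \<times> bool \<times> 'x \<times> 'z) list \<Rightarrow> 'z list" where
  "Zv \<omega> = map (\<lambda>(u, v, x, z). z) \<omega>"

definition Tv :: "nat \<Rightarrow> (bool \<times> bool \<times> 'x \<times> 'z) list \<Rightarrow> nat \<Rightarrow> bool" where
  "Tv n \<omega> = polar n (Vv \<omega>)"

text \<open>The set H_{V|U,Z} (0-indexed: index i corresponds to i+1 in [N];
  T^{i-1} becomes the prefix T_0..T_{i-1}).\<close>
definition Hset :: "real \<Rightarrow> nat \<Rightarrow> (bool \<times> bool \<times> 'x \<times> 'z \<Rightarrow> real) \<Rightarrow> 'x set \<Rightarrow> 'z set \<Rightarrow> nat set" where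
  "Hset \<beta> n p X Z = {i. i < 2 ^ n \<and>
     bhatt (iid p) (outcomes (2 ^ n) X Z) (\<lambda>\<omega>. Tv n \<omega> i)
        (\<lambda>\<omega>. (map (Tv n \<omega>) [0..<i], Uv \<omega>, Zv \<omega>))
     \<ge> 1 - 2 powr (- (real (2 ^ n) powr \<beta>))}"

end

theory Submission
  imports Defs "HOL-Library.FuncSet"
begin


definition pv :: "('o \<Rightarrow> real) \<Rightarrow> 'o set \<Rightarrow> ('o \<Rightarrow> 'a) \<Rightarrow> 'a \<Rightarrow> real" where
  "pv \<mu> S V v = prb \<mu> S (\<lambda>\<omega>. V \<omega> = v)"

definition Hc :: "('o \<Rightarrow> real) \<Rightarrow> 'o set \<Rightarrow> ('o \<Rightarrow> 'a) \<Rightarrow> ('o \<Rightarrow> 'b) \<Rightarrow> real" where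
  "Hc \<mu> S X Y = (\<Sum>\<omega>\<in>S. \<mu> \<omega> * log 2 (pv \<mu> S Y (Y \<omega>) / pv \<mu> S (\<lambda>\<omega>. (X \<omega>, Y \<omega>)) (X \<omega>, Y \<omega>)))"

lemma E_lemma:
  assumes "finite S"
  shows "(\<Sum>\<omega>\<in>S. \<mu> \<omega> * G (V \<omega>)) = (\<Sum>v\<in>V ` S. pv \<mu> S V v * G v)"
proof -
  have "(\<Sum>\<omega>\<in>S. \<mu> \<omega> * G (V \<omega>)) = (\<Sum>v\<in>V ` S. \<Sum>\<omega>\<in>{\<omega>\<in>S. V \<omega> = v}. \<mu> \<omega> * G (V \<omega>))"
    by (rule sum.image_gen[OF assms])
  also have "\<dots> = (\<Sum>v\<in>V ` S. \<Sum>\<omega>\<in>{\<omega>\<in>S. V \<omega> = v}. \<mu> \<omega> * G v)"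
    by (intro sum.cong) auto
  also have "\<dots> = (\<Sum>v\<in>V ` S. pv \<mu> S V v * G v)"
    by (simp add: pv_def prb_def sum_distrib_right)
  finally show ?thesis .
qed

lemma prb_nonneg: "(\<forall>\<omega>\<in>S. 0 \<le> \<mu> \<omega>) \<Longrightarrow> 0 \<le> prb \<mu> S P"
  unfolding prb_def by (rule sum_nonneg) auto

lemma pv_nonneg: "(\<forall>\<omega>\<in>S. 0 \<le> \<mu> \<omega>) \<Longrightarrow> 0 \<le> pv \<mu> S V v"
  unfolding pv_def by (rule prb_nonneg)

lemma pv_ge: "finite S \<Longrightarrow> (\<forall>\<omega>\<in>S. 0 \<le> \<mu> \<omega>) \<Longrightarrow> \<omega> \<in> S \<Longrightarrow> \<mu> \<omega> \<le> pv \<mu> S V (V \<omega>)"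
  unfolding pv_def prb_def by (rule member_le_sum) auto

lemma prb_mono: "finite S \<Longrightarrow> (\<forall>\<omega>\<in>S. 0 \<le> \<mu> \<omega>) \<Longrightarrow> (\<And>\<omega>. \<omega>\<in>S \<Longrightarrow> P \<omega> \<Longrightarrow> P' \<omega>)
   \<Longrightarrow> prb \<mu> S P \<le> prb \<mu> S P'"
  unfolding prb_def by (rule sum_mono2) auto

lemma prb_cong: "(\<And>\<omega>. \<omega>\<in>S \<Longrightarrow> P \<omega> = P' \<omega>) \<Longrightarrow> prb \<mu> S P = prb \<mu> S P'"
  unfolding prb_def by (rule sum.cong) auto

lemma pair_le: "finite S \<Longrightarrow> (\<forall>\<omega>\<in>S. 0 \<le> \<mu> \<omega>) \<Longrightarrow>
   pv \<mu> S (\<lambda>\<omega>. (X \<omega>, Y \<omega>)) (x, y) \<le> pv \<mu> S Y y"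
  unfolding pv_def by (rule prb_mono) auto

lemma sum_pv: "finite S \<Longrightarrow> (\<Sum>v\<in>V ` S. pv \<mu> S V v) = (\<Sum>\<omega>\<in>S. \<mu> \<omega>)"
  using E_lemma[of S \<mu> "\<lambda>_. 1" V] by simp

lemma marg: assumes "finite S"
  shows "(\<Sum>x\<in>X ` S. pv \<mu> S (\<lambda>\<omega>. (X \<omega>, Y \<omega>)) (x, y)) = pv \<mu> S Y y"
proof -
  have "(\<Sum>x\<in>X ` S. \<Sum>\<omega>\<in>{\<omega>. \<omega> \<in> {\<omega>\<in>S. Y \<omega> = y} \<and> X \<omega> = x}. \<mu> \<omega>) = (\<Sum>\<omega>\<in>{\<omega>\<in>S. Y \<omega> = y}. \<mu> \<omega>)"
    by (rule sum.group) (use assms in auto)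
  moreover have "\<And>x. {\<omega>. \<omega> \<in> {\<omega>\<in>S. Y \<omega> = y} \<and> X \<omega> = x} = {\<omega>\<in>S. (X \<omega>, Y \<omega>) = (x, y)}" by auto
  ultimately show ?thesis by (simp add: pv_def prb_def)
qed

lemma pv_lin: "pv (\<lambda>\<omega>. \<mu>1 \<omega> + \<mu>2 \<omega>) S V v = pv \<mu>1 S V v + pv \<mu>2 S V v"
  unfolding pv_def prb_def by (simp add: sum.distrib)

lemma gibbs:
  assumes "finite S" "\<forall>\<omega>\<in>S. 0 \<le> \<mu> \<omega>" "\<And>\<omega>. \<omega>\<in>S \<Longrightarrow> 0 < \<mu> \<omega> \<Longrightarrow> 0 < F \<omega>"
  shows "(\<Sum>\<omega>\<in>S. \<mu> \<omega> * log 2 (F \<omega>)) \<ge> ((\<Sum>\<omega>\<in>S. \<mu> \<omega>) - (\<Sum>\<omega>\<in>S. \<mu> \<omega> / F \<omega>)) / ln 2"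
proof -
  have "(\<mu> \<omega> - \<mu> \<omega> / F \<omega>) / ln 2 \<le> \<mu> \<omega> * log 2 (F \<omega>)" if "\<omega> \<in> S" for \<omega>
  proof (cases "\<mu> \<omega> = 0")
    case True then show ?thesis by simp
  next
    case False
    then have m: "0 < \<mu> \<omega>" using assms(2) that by force
    then have F: "0 < F \<omega>" using assms(3) that by blast
    have "ln (1 / F \<omega>) \<le> 1 / F \<omega> - 1" using F by (intro ln_le_minus_one) simp
    then have "1 - 1 / F \<omega> \<le> ln (F \<omega>)" using F by (simp add: ln_div)
    then have "\<mu> \<omega> * (1 - 1 / F \<omega>) \<le> \<mu> \<omega> * ln (F \<omega>)" using m by (intro mult_left_mono) auto
    then have "(\<mu> \<omega> - \<mu> \<omega> / F \<omega>) / ln 2 \<le> (\<mu> \<omega> * ln (F \<omega>)) / ln 2"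
      by (intro divide_right_mono) (auto simp: algebra_simps)
    then show ?thesis by (simp add: log_def)
  qed
  then have "(\<Sum>\<omega>\<in>S. (\<mu> \<omega> - \<mu> \<omega> / F \<omega>) / ln 2) \<le> (\<Sum>\<omega>\<in>S. \<mu> \<omega> * log 2 (F \<omega>))"
    by (rule sum_mono)
  then show ?thesis by (simp add: sum_divide_distrib[symmetric] sum_subtractf)
qed



lemma pv_pos:
  assumes "finite S" "\<forall>\<omega>\<in>S. 0 \<le> \<mu> \<omega>" "\<omega> \<in> S" "0 < \<mu> \<omega>"
  shows "0 < pv \<mu> S V (V \<omega>)"
  using pv_ge[OF assms(1,2,3), of V] assms(4) by linarith

lemma Hc_nonneg:
  assumes fS: "finite S" and nn: "\<forall>\<omega>\<in>S. 0 \<le> \<mu> \<omega>"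
  shows "0 \<le> Hc \<mu> S X Y"
  unfolding Hc_def
proof (rule sum_nonneg)
  fix \<omega> assume w: "\<omega> \<in> S"
  show "0 \<le> \<mu> \<omega> * log 2 (pv \<mu> S Y (Y \<omega>) / pv \<mu> S (\<lambda>\<omega>. (X \<omega>, Y \<omega>)) (X \<omega>, Y \<omega>))"
  proof (cases "\<mu> \<omega> = 0")
    case False
    then have m: "0 < \<mu> \<omega>" using nn w by fastforce
    have a: "0 < pv \<mu> S (\<lambda>\<omega>. (X \<omega>, Y \<omega>)) (X \<omega>, Y \<omega>)"
      using pv_pos[where V="\<lambda>\<omega>. (X \<omega>, Y \<omega>)", OF fS nn w m] by simp
    have "pv \<mu> S (\<lambda>\<omega>. (X \<omega>, Y \<omega>)) (X \<omega>, Y \<omega>) \<le> pv \<mu> S Y (Y \<omega>)" by (rule pair_le[OF fS nn])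
    then have "1 \<le> pv \<mu> S Y (Y \<omega>) / pv \<mu> S (\<lambda>\<omega>. (X \<omega>, Y \<omega>)) (X \<omega>, Y \<omega>)" using a by simp
    then show ?thesis using m by simp
  qed simp
qed

lemma Hc_le_card:
  assumes fS: "finite S" and nn: "\<forall>\<omega>\<in>S. 0 \<le> \<mu> \<omega>"
  shows "Hc \<mu> S X Y \<le> (\<Sum>\<omega>\<in>S. \<mu> \<omega>) * log 2 (real (card (X ` S)))"
proof (cases "S = {}")
  case True then show ?thesis by (simp add: Hc_def)
next
  case False
  define K where "K = real (card (X ` S))"
  have K: "1 \<le> K" unfolding K_def using False fS by (simp add: Suc_leI card_gt_0_iff)
  define W where "W = (\<lambda>\<omega>. (X \<omega>, Y \<omega>))"
  define F where "F = (\<lambda>\<omega>. K * pv \<mu> S W (W \<omega>) / pv \<mu> S Y (Y \<omega>))"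
  have Fpos: "0 < F \<omega>" if "\<omega> \<in> S" "0 < \<mu> \<omega>" for \<omega>
    using pv_pos[where V=W, OF fS nn that] pv_pos[where V=Y, OF fS nn that] K unfolding F_def by simp
  have g: "(\<Sum>\<omega>\<in>S. \<mu> \<omega> * log 2 (F \<omega>)) \<ge> ((\<Sum>\<omega>\<in>S. \<mu> \<omega>) - (\<Sum>\<omega>\<in>S. \<mu> \<omega> / F \<omega>)) / ln 2"
    by (rule gibbs[OF fS nn Fpos])
  have "(\<Sum>\<omega>\<in>S. \<mu> \<omega> / F \<omega>) = (\<Sum>\<omega>\<in>S. \<mu> \<omega> * (\<lambda>w. pv \<mu> S Y (snd w) / (K * pv \<mu> S W w)) (W \<omega>))"
    unfolding F_def W_def by (intro sum.cong) auto
  also have "\<dots> = (\<Sum>w\<in>W ` S. pv \<mu> S W w * (pv \<mu> S Y (snd w) / (K * pv \<mu> S W w)))"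
    by (rule E_lemma[OF fS])
  also have "\<dots> \<le> (\<Sum>w\<in>W ` S. pv \<mu> S Y (snd w) / K)"
    by (intro sum_mono) (use K pv_nonneg[OF nn] in \<open>auto intro!: divide_nonneg_nonneg\<close>)
  also have "\<dots> \<le> (\<Sum>w\<in>X ` S \<times> Y ` S. pv \<mu> S Y (snd w) / K)"
    by (intro sum_mono2) (use fS K pv_nonneg[OF nn] in \<open>auto simp: W_def intro!: divide_nonneg_nonneg\<close>)
  also have "\<dots> = (\<Sum>x\<in>X ` S. \<Sum>y\<in>Y ` S. pv \<mu> S Y y / K)"
    unfolding sum.cartesian_product' by simp
  also have "\<dots> = K * (\<Sum>y\<in>Y ` S. pv \<mu> S Y y / K)"
    by (simp add: K_def)
  also have "\<dots> = (\<Sum>\<omega>\<in>S. \<mu> \<omega>)"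
    using K by (simp add: sum_divide_distrib[symmetric] sum_pv[OF fS])
  finally have "0 \<le> (\<Sum>\<omega>\<in>S. \<mu> \<omega> * log 2 (F \<omega>))" using g by (smt (verit) divide_nonneg_pos ln_gt_zero)
  also have "(\<Sum>\<omega>\<in>S. \<mu> \<omega> * log 2 (F \<omega>)) = (\<Sum>\<omega>\<in>S. \<mu> \<omega> * log 2 K) - Hc \<mu> S X Y"
    unfolding Hc_def sum_subtractf[symmetric]
  proof (intro sum.cong refl)
    fix \<omega> assume w: "\<omega> \<in> S"
    show "\<mu> \<omega> * log 2 (F \<omega>) = \<mu> \<omega> * log 2 K - \<mu> \<omega> * log 2 (pv \<mu> S Y (Y \<omega>) / pv \<mu> S (\<lambda>\<omega>. (X \<omega>, Y \<omega>)) (X \<omega>, Y \<omega>))"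
    proof (cases "\<mu> \<omega> = 0")
      case False
      then have m: "0 < \<mu> \<omega>" using nn w by fastforce
      have a: "0 < pv \<mu> S W (W \<omega>)" "0 < pv \<mu> S Y (Y \<omega>)" using pv_pos[where V=W, OF fS nn w m] pv_pos[where V=Y, OF fS nn w m] by auto
      then show ?thesis using K unfolding F_def W_def
        by (simp add: log_divide log_mult algebra_simps)
    qed simp
  qed
  finally show ?thesis by (simp add: sum_distrib_right[symmetric] K_def)
qed



lemma pv_image_le:
  assumes fS: "finite S" and nn: "\<forall>\<omega>\<in>S. 0 \<le> \<mu> \<omega>" and f: "\<forall>\<omega>\<in>S. Y \<omega> = f (Y' \<omega>)"
  shows "pv \<mu> S Y' y' \<le> pv \<mu> S Y (f y')"
  unfolding pv_def by (rule prb_mono[OF fS nn]) (use f in auto)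

lemma Hc_mono:
  assumes fS: "finite S" and nn: "\<forall>\<omega>\<in>S. 0 \<le> \<mu> \<omega>" and f: "\<forall>\<omega>\<in>S. Y \<omega> = f (Y' \<omega>)"
  shows "Hc \<mu> S X Y' \<le> Hc \<mu> S X Y"
proof -
  define W where "W = (\<lambda>\<omega>. (X \<omega>, Y \<omega>))"
  define W' where "W' = (\<lambda>\<omega>. (X \<omega>, Y' \<omega>))"
  define F where "F = (\<lambda>\<omega>. pv \<mu> S Y (Y \<omega>) * pv \<mu> S W' (W' \<omega>) / (pv \<mu> S W (W \<omega>) * pv \<mu> S Y' (Y' \<omega>)))"
  have Fpos: "0 < F \<omega>" if "\<omega> \<in> S" "0 < \<mu> \<omega>" for \<omega>
    using pv_pos[OF fS nn that, of W] pv_pos[OF fS nn that, of Y] pv_pos[OF fS nn that, of W']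
      pv_pos[OF fS nn that, of Y'] unfolding F_def by simp
  have g: "(\<Sum>\<omega>\<in>S. \<mu> \<omega> * log 2 (F \<omega>)) \<ge> ((\<Sum>\<omega>\<in>S. \<mu> \<omega>) - (\<Sum>\<omega>\<in>S. \<mu> \<omega> / F \<omega>)) / ln 2"
    by (rule gibbs[OF fS nn Fpos])
  define G where "G = (\<lambda>w. pv \<mu> S W (fst w, f (snd w)) * pv \<mu> S Y' (snd w) / (pv \<mu> S Y (f (snd w)) * pv \<mu> S W' w))"
  have "(\<Sum>\<omega>\<in>S. \<mu> \<omega> / F \<omega>) = (\<Sum>\<omega>\<in>S. \<mu> \<omega> * G (W' \<omega>))"
    unfolding F_def G_def W_def W'_def by (intro sum.cong) (use f in auto)
  also have "\<dots> = (\<Sum>w\<in>W' ` S. pv \<mu> S W' w * G w)"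
    by (rule E_lemma[OF fS])
  also have "\<dots> \<le> (\<Sum>w\<in>W' ` S. pv \<mu> S W (fst w, f (snd w)) * (pv \<mu> S Y' (snd w) / pv \<mu> S Y (f (snd w))))"
    by (intro sum_mono) (use pv_nonneg[OF nn, of Y'] pv_nonneg[OF nn, of Y] pv_nonneg[OF nn, of W'] pv_nonneg[OF nn, of W] in \<open>auto simp: G_def intro!: divide_nonneg_nonneg mult_nonneg_nonneg\<close>)
  also have "\<dots> \<le> (\<Sum>w\<in>X ` S \<times> Y' ` S. pv \<mu> S W (fst w, f (snd w)) * (pv \<mu> S Y' (snd w) / pv \<mu> S Y (f (snd w))))"
    by (intro sum_mono2) (use fS pv_nonneg[OF nn, of Y'] pv_nonneg[OF nn, of Y] pv_nonneg[OF nn, of W'] pv_nonneg[OF nn, of W] in \<open>auto simp: W'_def intro!: divide_nonneg_nonneg mult_nonneg_nonneg\<close>)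
  also have "\<dots> = (\<Sum>y\<in>Y' ` S. (\<Sum>x\<in>X ` S. pv \<mu> S W (x, f y)) * (pv \<mu> S Y' y / pv \<mu> S Y (f y)))"
    unfolding sum.cartesian_product' by (subst sum.swap) (simp add: sum_distrib_right sum_divide_distrib)
  also have "\<dots> = (\<Sum>y\<in>Y' ` S. pv \<mu> S Y (f y) * (pv \<mu> S Y' y / pv \<mu> S Y (f y)))"
    unfolding W_def by (simp add: marg[OF fS])
  also have "\<dots> = (\<Sum>y\<in>Y' ` S. pv \<mu> S Y' y)"
  proof (intro sum.cong refl)
    fix y assume "y \<in> Y' ` S"
    show "pv \<mu> S Y (f y) * (pv \<mu> S Y' y / pv \<mu> S Y (f y)) = pv \<mu> S Y' y"
      using pv_image_le[where f=f and Y=Y and Y'=Y' and y'=y, OF fS nn f] pv_nonneg[OF nn, of Y' y] by (cases "pv \<mu> S Y (f y) = 0") auto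
  qed
  also have "\<dots> = (\<Sum>\<omega>\<in>S. \<mu> \<omega>)" by (rule sum_pv[OF fS])
  finally have "0 \<le> (\<Sum>\<omega>\<in>S. \<mu> \<omega> * log 2 (F \<omega>))" using g by (smt (verit) divide_nonneg_pos ln_gt_zero)
  also have "(\<Sum>\<omega>\<in>S. \<mu> \<omega> * log 2 (F \<omega>)) = Hc \<mu> S X Y - Hc \<mu> S X Y'"
    unfolding Hc_def sum_subtractf[symmetric]
  proof (intro sum.cong refl)
    fix \<omega> assume w: "\<omega> \<in> S"
    show "\<mu> \<omega> * log 2 (F \<omega>) = \<mu> \<omega> * log 2 (pv \<mu> S Y (Y \<omega>) / pv \<mu> S (\<lambda>\<omega>. (X \<omega>, Y \<omega>)) (X \<omega>, Y \<omega>)) - \<mu> \<omega> * log 2 (pv \<mu> S Y' (Y' \<omega>) / pv \<mu> S (\<lambda>\<omega>. (X \<omega>, Y' \<omega>)) (X \<omega>, Y' \<omega>))"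
    proof (cases "\<mu> \<omega> = 0")
      case False
      then have m: "0 < \<mu> \<omega>" using nn w by fastforce
      have a: "0 < pv \<mu> S W (W \<omega>)" "0 < pv \<mu> S Y (Y \<omega>)" "0 < pv \<mu> S W' (W' \<omega>)" "0 < pv \<mu> S Y' (Y' \<omega>)"
        using pv_pos[OF fS nn w m] by auto
      then show ?thesis unfolding F_def W_def W'_def
        by (simp add: log_divide log_mult algebra_simps)
    qed simp
  qed
  finally show ?thesis by simp
qed

lemma chain:
  assumes fS: "finite S" and nn: "\<forall>\<omega>\<in>S. 0 \<le> \<mu> \<omega>"
    and ev: "\<forall>\<omega>\<in>S. \<forall>\<omega>'\<in>S. (X' \<omega>' = X' \<omega>) = (X1 \<omega>' = X1 \<omega> \<and> X2 \<omega>' = X2 \<omega>)"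
  shows "Hc \<mu> S X' Y = Hc \<mu> S X2 Y + Hc \<mu> S X1 (\<lambda>\<omega>. (X2 \<omega>, Y \<omega>))"
  unfolding Hc_def sum.distrib[symmetric]
proof (intro sum.cong refl)
  fix \<omega> assume w: "\<omega> \<in> S"
  define A where "A = pv \<mu> S (\<lambda>\<omega>. (X' \<omega>, Y \<omega>)) (X' \<omega>, Y \<omega>)"
  define B where "B = pv \<mu> S (\<lambda>\<omega>. (X2 \<omega>, Y \<omega>)) (X2 \<omega>, Y \<omega>)"
  define C where "C = pv \<mu> S (\<lambda>\<omega>. (X1 \<omega>, X2 \<omega>, Y \<omega>)) (X1 \<omega>, X2 \<omega>, Y \<omega>)"
  have AC: "A = C" unfolding A_def C_def pv_def by (rule prb_cong) (use ev w in auto)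
  show "\<mu> \<omega> * log 2 (pv \<mu> S Y (Y \<omega>) / pv \<mu> S (\<lambda>\<omega>. (X' \<omega>, Y \<omega>)) (X' \<omega>, Y \<omega>)) =
     \<mu> \<omega> * log 2 (pv \<mu> S Y (Y \<omega>) / pv \<mu> S (\<lambda>\<omega>. (X2 \<omega>, Y \<omega>)) (X2 \<omega>, Y \<omega>)) +
     \<mu> \<omega> * log 2 (pv \<mu> S (\<lambda>\<omega>. (X2 \<omega>, Y \<omega>)) (X2 \<omega>, Y \<omega>) / pv \<mu> S (\<lambda>\<omega>. (X1 \<omega>, X2 \<omega>, Y \<omega>)) (X1 \<omega>, X2 \<omega>, Y \<omega>))"
  proof (cases "\<mu> \<omega> = 0")
    case False
    then have m: "0 < \<mu> \<omega>" using nn w by fastforce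
    have "0 < A" "0 < B" "0 < pv \<mu> S Y (Y \<omega>)"
      unfolding A_def B_def using pv_pos[OF fS nn w m] by auto
    then show ?thesis using AC unfolding A_def[symmetric] B_def[symmetric] C_def[symmetric]
      by (simp add: log_divide algebra_simps)
  qed simp
qed



lemma superadd:
  assumes fS: "finite S" and nn1: "\<forall>\<omega>\<in>S. 0 \<le> \<mu>1 \<omega>" and nn2: "\<forall>\<omega>\<in>S. 0 \<le> \<mu>2 \<omega>"
    and mu: "\<mu> = (\<lambda>\<omega>. \<mu>1 \<omega> + \<mu>2 \<omega>)"
  shows "Hc \<mu>1 S X Y + Hc \<mu>2 S X Y \<le> Hc \<mu> S X Y"
proof -
  have nn: "\<forall>\<omega>\<in>S. 0 \<le> \<mu> \<omega>" using nn1 nn2 mu by auto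
  define W where "W = (\<lambda>\<omega>. (X \<omega>, Y \<omega>))"
  have lin: "pv \<mu> S V v = pv \<mu>1 S V v + pv \<mu>2 S V v" for V :: "_ \<Rightarrow> 'z" and v
    unfolding mu by (rule pv_lin)
  define c where "c = (\<lambda>y. pv \<mu> S Y y)"
  define a where "a = (\<lambda>w. pv \<mu> S W w)"
  have ac: "a w \<le> c (snd w)" "0 \<le> a w" for w
    using pair_le[OF fS nn, of X Y "fst w" "snd w"] pv_nonneg[OF nn, of W w] unfolding a_def c_def W_def by simp_all
  have key: "(\<Sum>\<omega>\<in>S. \<mu>i \<omega> * log 2 (c (Y \<omega>) * pv \<mu>i S W (W \<omega>) / (a (W \<omega>) * pv \<mu>i S Y (Y \<omega>))))
     \<ge> ((\<Sum>\<omega>\<in>S. \<mu>i \<omega>) - (\<Sum>w\<in>W ` S. a w * pv \<mu>i S Y (snd w) / c (snd w))) / ln 2"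
    if nni: "\<forall>\<omega>\<in>S. 0 \<le> \<mu>i \<omega>" and le: "\<forall>\<omega>\<in>S. \<mu>i \<omega> \<le> \<mu> \<omega>"
      and lea: "\<And>V v. pv \<mu>i S V v \<le> pv \<mu> S V v" for \<mu>i
  proof -
    define F where "F = (\<lambda>\<omega>. c (Y \<omega>) * pv \<mu>i S W (W \<omega>) / (a (W \<omega>) * pv \<mu>i S Y (Y \<omega>)))"
    have Fpos: "0 < F \<omega>" if "\<omega> \<in> S" "0 < \<mu>i \<omega>" for \<omega>
    proof -
      have "0 < \<mu> \<omega>" using le that by force
      then show ?thesis
      using pv_pos[OF fS nni that, of W] pv_pos[OF fS nni that, of Y] pv_pos[OF fS nn that(1), of W]
        pv_pos[OF fS nn that(1), of Y] unfolding F_def a_def c_def by simp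
    qed
    have g: "(\<Sum>\<omega>\<in>S. \<mu>i \<omega> * log 2 (F \<omega>)) \<ge> ((\<Sum>\<omega>\<in>S. \<mu>i \<omega>) - (\<Sum>\<omega>\<in>S. \<mu>i \<omega> / F \<omega>)) / ln 2"
      by (rule gibbs[OF fS nni Fpos])
    define G where "G = (\<lambda>w. a w * pv \<mu>i S Y (snd w) / (c (snd w) * pv \<mu>i S W w))"
    have "(\<Sum>\<omega>\<in>S. \<mu>i \<omega> / F \<omega>) = (\<Sum>\<omega>\<in>S. \<mu>i \<omega> * G (W \<omega>))"
      unfolding F_def G_def W_def by (intro sum.cong) auto
    also have "\<dots> = (\<Sum>w\<in>W ` S. pv \<mu>i S W w * G w)"
      by (rule E_lemma[OF fS])
    also have "\<dots> \<le> (\<Sum>w\<in>W ` S. a w * pv \<mu>i S Y (snd w) / c (snd w))"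
      proof (intro sum_mono)
      fix w assume "w \<in> W ` S"
      show "pv \<mu>i S W w * G w \<le> a w * pv \<mu>i S Y (snd w) / c (snd w)"
      proof (cases "pv \<mu>i S W w = 0")
        case True
        then show ?thesis using ac[of w] pv_nonneg[OF nni, of Y "snd w"] pv_nonneg[OF nn, of Y "snd w"]
          unfolding c_def by simp
      next
        case False
        then show ?thesis unfolding G_def by simp
      qed
    qed
    finally have "(\<Sum>\<omega>\<in>S. \<mu>i \<omega> / F \<omega>) \<le> (\<Sum>w\<in>W ` S. a w * pv \<mu>i S Y (snd w) / c (snd w))" .
    then have "((\<Sum>\<omega>\<in>S. \<mu>i \<omega>) - (\<Sum>\<omega>\<in>S. \<mu>i \<omega> / F \<omega>)) / ln 2 \<ge> ((\<Sum>\<omega>\<in>S. \<mu>i \<omega>) - (\<Sum>w\<in>W ` S. a w * pv \<mu>i S Y (snd w) / c (snd w))) / ln 2"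
      by (intro divide_right_mono) auto
    then show ?thesis using g unfolding F_def by linarith
  qed
  have lea1: "pv \<mu>1 S V v \<le> pv \<mu> S V v" for V :: "_ \<Rightarrow> 'z" and v
    using lin[of V v] pv_nonneg[OF nn2, of V v] by simp
  have lea2: "pv \<mu>2 S V v \<le> pv \<mu> S V v" for V :: "_ \<Rightarrow> 'z" and v
    using lin[of V v] pv_nonneg[OF nn1, of V v] by simp
  have k1: "(\<Sum>\<omega>\<in>S. \<mu>1 \<omega> * log 2 (c (Y \<omega>) * pv \<mu>1 S W (W \<omega>) / (a (W \<omega>) * pv \<mu>1 S Y (Y \<omega>))))
     \<ge> ((\<Sum>\<omega>\<in>S. \<mu>1 \<omega>) - (\<Sum>w\<in>W ` S. a w * pv \<mu>1 S Y (snd w) / c (snd w))) / ln 2"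
    by (rule key[OF nn1]) (use nn2 mu lea1 in auto)
  have k2: "(\<Sum>\<omega>\<in>S. \<mu>2 \<omega> * log 2 (c (Y \<omega>) * pv \<mu>2 S W (W \<omega>) / (a (W \<omega>) * pv \<mu>2 S Y (Y \<omega>))))
     \<ge> ((\<Sum>\<omega>\<in>S. \<mu>2 \<omega>) - (\<Sum>w\<in>W ` S. a w * pv \<mu>2 S Y (snd w) / c (snd w))) / ln 2"
    by (rule key[OF nn2]) (use nn1 mu lea2 in auto)
  have "(\<Sum>w\<in>W ` S. a w * pv \<mu>1 S Y (snd w) / c (snd w)) + (\<Sum>w\<in>W ` S. a w * pv \<mu>2 S Y (snd w) / c (snd w))
      = (\<Sum>w\<in>W ` S. a w)"
    unfolding sum.distrib[symmetric]
  proof (intro sum.cong refl)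
    fix w
    show "a w * pv \<mu>1 S Y (snd w) / c (snd w) + a w * pv \<mu>2 S Y (snd w) / c (snd w) = a w"
      using ac[of w] lin[of Y "snd w"] unfolding c_def
      by (cases "pv \<mu> S Y (snd w) = 0") (auto simp: add_divide_distrib[symmetric] distrib_left[symmetric])
  qed
  also have "\<dots> = (\<Sum>\<omega>\<in>S. \<mu>1 \<omega>) + (\<Sum>\<omega>\<in>S. \<mu>2 \<omega>)"
    unfolding a_def sum_pv[OF fS] mu by (simp add: sum.distrib)
  finally have "0 \<le> (\<Sum>\<omega>\<in>S. \<mu>1 \<omega> * log 2 (c (Y \<omega>) * pv \<mu>1 S W (W \<omega>) / (a (W \<omega>) * pv \<mu>1 S Y (Y \<omega>))))
      + (\<Sum>\<omega>\<in>S. \<mu>2 \<omega> * log 2 (c (Y \<omega>) * pv \<mu>2 S W (W \<omega>) / (a (W \<omega>) * pv \<mu>2 S Y (Y \<omega>))))"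
  proof -
    define s1 where "s1 = (\<Sum>w\<in>W ` S. a w * pv \<mu>1 S Y (snd w) / c (snd w))"
    define s2 where "s2 = (\<Sum>w\<in>W ` S. a w * pv \<mu>2 S Y (snd w) / c (snd w))"
    assume eq: "s1 + s2 = (\<Sum>\<omega>\<in>S. \<mu>1 \<omega>) + (\<Sum>\<omega>\<in>S. \<mu>2 \<omega>)"
    have "((\<Sum>\<omega>\<in>S. \<mu>1 \<omega>) - s1) / ln 2 + ((\<Sum>\<omega>\<in>S. \<mu>2 \<omega>) - s2) / ln 2 = (((\<Sum>\<omega>\<in>S. \<mu>1 \<omega>) - s1) + ((\<Sum>\<omega>\<in>S. \<mu>2 \<omega>) - s2)) / ln 2"
      by (simp add: add_divide_distrib)
    also have "\<dots> = 0" using eq by simp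
    finally show ?thesis using k1 k2 unfolding s1_def[symmetric] s2_def[symmetric] by linarith
  qed
  also have "\<dots> = Hc \<mu> S X Y - Hc \<mu>1 S X Y - Hc \<mu>2 S X Y"
  proof -
    have t: "\<mu>i \<omega> * log 2 (c (Y \<omega>) * pv \<mu>i S W (W \<omega>) / (a (W \<omega>) * pv \<mu>i S Y (Y \<omega>)))
      = \<mu>i \<omega> * log 2 (c (Y \<omega>) / a (W \<omega>)) - \<mu>i \<omega> * log 2 (pv \<mu>i S Y (Y \<omega>) / pv \<mu>i S W (W \<omega>))"
      if "\<omega> \<in> S" "\<forall>\<omega>\<in>S. 0 \<le> \<mu>i \<omega>" "\<forall>\<omega>\<in>S. \<mu>i \<omega> \<le> \<mu> \<omega>" for \<omega> \<mu>i
    proof (cases "\<mu>i \<omega> = 0")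
      case False
      then have m: "0 < \<mu>i \<omega>" using that by fastforce
      then have m': "0 < \<mu> \<omega>" using that by force
      show ?thesis
        using pv_pos[OF fS that(2) that(1) m, of W] pv_pos[OF fS that(2) that(1) m, of Y]
          pv_pos[OF fS nn that(1) m', of W] pv_pos[OF fS nn that(1) m', of Y]
        unfolding a_def c_def by (simp add: log_divide log_mult algebra_simps)
    qed simp
    have "Hc \<mu> S X Y = (\<Sum>\<omega>\<in>S. \<mu>1 \<omega> * log 2 (c (Y \<omega>) / a (W \<omega>))) + (\<Sum>\<omega>\<in>S. \<mu>2 \<omega> * log 2 (c (Y \<omega>) / a (W \<omega>)))"
      unfolding Hc_def sum.distrib[symmetric] a_def c_def W_def by (intro sum.cong refl) (simp add: mu algebra_simps)
    moreover have "Hc \<mu>1 S X Y = (\<Sum>\<omega>\<in>S. \<mu>1 \<omega> * log 2 (pv \<mu>1 S Y (Y \<omega>) / pv \<mu>1 S W (W \<omega>)))"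
      "Hc \<mu>2 S X Y = (\<Sum>\<omega>\<in>S. \<mu>2 \<omega> * log 2 (pv \<mu>2 S Y (Y \<omega>) / pv \<mu>2 S W (W \<omega>)))"
      unfolding Hc_def W_def by simp_all
    moreover have "(\<Sum>\<omega>\<in>S. \<mu>1 \<omega> * log 2 (c (Y \<omega>) * pv \<mu>1 S W (W \<omega>) / (a (W \<omega>) * pv \<mu>1 S Y (Y \<omega>))))
       = (\<Sum>\<omega>\<in>S. \<mu>1 \<omega> * log 2 (c (Y \<omega>) / a (W \<omega>))) - (\<Sum>\<omega>\<in>S. \<mu>1 \<omega> * log 2 (pv \<mu>1 S Y (Y \<omega>) / pv \<mu>1 S W (W \<omega>)))"
      unfolding sum_subtractf[symmetric] by (intro sum.cong refl t) (use nn1 nn2 mu in auto)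
    moreover have "(\<Sum>\<omega>\<in>S. \<mu>2 \<omega> * log 2 (c (Y \<omega>) * pv \<mu>2 S W (W \<omega>) / (a (W \<omega>) * pv \<mu>2 S Y (Y \<omega>))))
       = (\<Sum>\<omega>\<in>S. \<mu>2 \<omega> * log 2 (c (Y \<omega>) / a (W \<omega>))) - (\<Sum>\<omega>\<in>S. \<mu>2 \<omega> * log 2 (pv \<mu>2 S Y (Y \<omega>) / pv \<mu>2 S W (W \<omega>)))"
      unfolding sum_subtractf[symmetric] by (intro sum.cong refl t) (use nn1 nn2 mu in auto)
    ultimately show ?thesis by linarith
  qed
  finally show ?thesis by linarith
qed



lemma half_mix:
  assumes fS: "finite S" and nn1: "\<forall>\<omega>\<in>S. 0 \<le> \<mu>1 \<omega>" and nn2: "\<forall>\<omega>\<in>S. 0 \<le> \<mu>2 \<omega>"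
    and mu: "\<mu> = (\<lambda>\<omega>. \<mu>1 \<omega> + \<mu>2 \<omega>)"
  shows "(\<Sum>\<omega>\<in>S. \<mu>1 \<omega> * log 2 (pv \<mu> S Y (Y \<omega>) / pv \<mu> S (\<lambda>\<omega>. (X \<omega>, Y \<omega>)) (X \<omega>, Y \<omega>)))
     \<le> Hc \<mu>1 S X Y + (\<Sum>\<omega>\<in>S. \<mu>1 \<omega>) * log 2 ((\<Sum>\<omega>\<in>S. \<mu> \<omega>) / (\<Sum>\<omega>\<in>S. \<mu>1 \<omega>))"
proof -
  have nn: "\<forall>\<omega>\<in>S. 0 \<le> \<mu> \<omega>" using nn1 nn2 mu by auto
  define W where "W = (\<lambda>\<omega>. (X \<omega>, Y \<omega>))"
  have lin: "pv \<mu> S V v = pv \<mu>1 S V v + pv \<mu>2 S V v" for V :: "_ \<Rightarrow> 'z" and v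
    unfolding mu by (rule pv_lin)
  define m1 where "m1 = (\<Sum>\<omega>\<in>S. \<mu>1 \<omega>)"
  define M where "M = (\<Sum>\<omega>\<in>S. \<mu> \<omega>)"
  have Mm: "m1 \<le> M" unfolding m1_def M_def mu using nn2 by (simp add: sum.distrib sum_nonneg)
  define c where "c = (\<lambda>y. pv \<mu> S Y y)"
  define c1 where "c1 = (\<lambda>y. pv \<mu>1 S Y y)"
  define F where "F = (\<lambda>\<omega>. c1 (Y \<omega>) * M / (c (Y \<omega>) * m1))"
  have pos: "0 < \<mu> \<omega>" "0 < m1" "0 < M" if "\<omega> \<in> S" "0 < \<mu>1 \<omega>" for \<omega>
  proof -
    show "0 < \<mu> \<omega>" using that nn2 mu by force
    have "\<mu>1 \<omega> \<le> m1" unfolding m1_def using fS that nn1 by (intro member_le_sum) auto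
    then show "0 < m1" using that by linarith
    then show "0 < M" using Mm by linarith
  qed
  have Fpos: "0 < F \<omega>" if "\<omega> \<in> S" "0 < \<mu>1 \<omega>" for \<omega>
    using pv_pos[OF fS nn1 that, of Y] pv_pos[OF fS nn that(1) pos(1)[OF that], of Y] pos[OF that]
    unfolding F_def c_def c1_def by simp
  have g: "(\<Sum>\<omega>\<in>S. \<mu>1 \<omega> * log 2 (F \<omega>)) \<ge> ((\<Sum>\<omega>\<in>S. \<mu>1 \<omega>) - (\<Sum>\<omega>\<in>S. \<mu>1 \<omega> / F \<omega>)) / ln 2"
    by (rule gibbs[OF fS nn1 Fpos])
  define G where "G = (\<lambda>y. c y * m1 / (c1 y * M))"
  have "(\<Sum>\<omega>\<in>S. \<mu>1 \<omega> / F \<omega>) = (\<Sum>\<omega>\<in>S. \<mu>1 \<omega> * G (Y \<omega>))"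
    unfolding F_def G_def by (intro sum.cong) auto
  also have "\<dots> = (\<Sum>y\<in>Y ` S. pv \<mu>1 S Y y * G y)"
    by (rule E_lemma[OF fS])
  also have "\<dots> \<le> (\<Sum>y\<in>Y ` S. c y * (m1 / M))"
  proof (intro sum_mono)
    fix y assume "y \<in> Y ` S"
    have "0 \<le> m1" "0 \<le> M" unfolding m1_def M_def using nn1 nn by (auto intro: sum_nonneg)
    then show "pv \<mu>1 S Y y * G y \<le> c y * (m1 / M)"
      using pv_nonneg[OF nn, of Y y] unfolding G_def c1_def c_def
      by (cases "pv \<mu>1 S Y y = 0") auto
  qed
  also have "\<dots> = M * (m1 / M)" unfolding c_def M_def sum_distrib_right[symmetric] sum_pv[OF fS] ..
  also have "\<dots> \<le> m1" using nn1 by (cases "M = 0") (auto simp: m1_def intro: sum_nonneg)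
  finally have "(\<Sum>\<omega>\<in>S. \<mu>1 \<omega> / F \<omega>) \<le> m1" .
  then have "0 \<le> (\<Sum>\<omega>\<in>S. \<mu>1 \<omega> * log 2 (F \<omega>))"
    using g unfolding m1_def[symmetric] by (smt (verit) divide_nonneg_pos ln_gt_zero)
  moreover have "(\<Sum>\<omega>\<in>S. \<mu>1 \<omega> * log 2 (pv \<mu> S Y (Y \<omega>) / pv \<mu> S W (W \<omega>)))
     \<le> (\<Sum>\<omega>\<in>S. \<mu>1 \<omega> * log 2 (pv \<mu>1 S Y (Y \<omega>) / pv \<mu>1 S W (W \<omega>)) + \<mu>1 \<omega> * log 2 (M / m1) - \<mu>1 \<omega> * log 2 (F \<omega>))"
  proof (intro sum_mono)
    fix \<omega> assume w: "\<omega> \<in> S"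
    show "\<mu>1 \<omega> * log 2 (pv \<mu> S Y (Y \<omega>) / pv \<mu> S W (W \<omega>))
     \<le> \<mu>1 \<omega> * log 2 (pv \<mu>1 S Y (Y \<omega>) / pv \<mu>1 S W (W \<omega>)) + \<mu>1 \<omega> * log 2 (M / m1) - \<mu>1 \<omega> * log 2 (F \<omega>)"
    proof (cases "\<mu>1 \<omega> = 0")
      case False
      then have m: "0 < \<mu>1 \<omega>" using nn1 w by fastforce
      note p = pos[OF w m]
      have a1: "0 < pv \<mu>1 S W (W \<omega>)" "0 < pv \<mu>1 S Y (Y \<omega>)"
        using pv_pos[OF fS nn1 w m, of W] pv_pos[OF fS nn1 w m, of Y] by auto
      have a: "0 < pv \<mu> S W (W \<omega>)" "0 < pv \<mu> S Y (Y \<omega>)"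
        using pv_pos[OF fS nn w p(1), of W] pv_pos[OF fS nn w p(1), of Y] by auto
      have le: "pv \<mu>1 S W (W \<omega>) \<le> pv \<mu> S W (W \<omega>)"
        using lin[of W "W \<omega>"] pv_nonneg[OF nn2, of W "W \<omega>"] by simp
      have "log 2 (pv \<mu>1 S W (W \<omega>)) \<le> log 2 (pv \<mu> S W (W \<omega>))"
        using le a1 by simp
      then have "log 2 (pv \<mu> S Y (Y \<omega>) / pv \<mu> S W (W \<omega>))
     \<le> log 2 (pv \<mu>1 S Y (Y \<omega>) / pv \<mu>1 S W (W \<omega>)) + log 2 (M / m1) - log 2 (F \<omega>)"
        using a a1 p unfolding F_def c_def c1_def by (simp add: log_divide log_mult)
      then show ?thesis using m
        by (metis (no_types, opaque_lifting) mult_left_mono less_eq_real_def right_diff_distrib distrib_left)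
    qed simp
  qed
  moreover have "(\<Sum>\<omega>\<in>S. \<mu>1 \<omega> * log 2 (pv \<mu>1 S Y (Y \<omega>) / pv \<mu>1 S W (W \<omega>)) + \<mu>1 \<omega> * log 2 (M / m1) - \<mu>1 \<omega> * log 2 (F \<omega>))
     = Hc \<mu>1 S X Y + m1 * log 2 (M / m1) - (\<Sum>\<omega>\<in>S. \<mu>1 \<omega> * log 2 (F \<omega>))"
    unfolding Hc_def W_def m1_def by (simp add: sum.distrib sum_subtractf sum_distrib_right)
  ultimately show ?thesis unfolding W_def m1_def M_def by linarith
qed

lemma mixing:
  assumes fS: "finite S" and nn1: "\<forall>\<omega>\<in>S. 0 \<le> \<mu>1 \<omega>" and nn2: "\<forall>\<omega>\<in>S. 0 \<le> \<mu>2 \<omega>"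
    and mu: "\<mu> = (\<lambda>\<omega>. \<mu>1 \<omega> + \<mu>2 \<omega>)"
  shows "Hc \<mu> S X Y \<le> Hc \<mu>1 S X Y + Hc \<mu>2 S X Y
     + (\<Sum>\<omega>\<in>S. \<mu>1 \<omega>) * log 2 ((\<Sum>\<omega>\<in>S. \<mu> \<omega>) / (\<Sum>\<omega>\<in>S. \<mu>1 \<omega>))
     + (\<Sum>\<omega>\<in>S. \<mu>2 \<omega>) * log 2 ((\<Sum>\<omega>\<in>S. \<mu> \<omega>) / (\<Sum>\<omega>\<in>S. \<mu>2 \<omega>))"
proof -
  have mu': "\<mu> = (\<lambda>\<omega>. \<mu>2 \<omega> + \<mu>1 \<omega>)" using mu by (simp add: add.commute)
  have "Hc \<mu> S X Y = (\<Sum>\<omega>\<in>S. \<mu>1 \<omega> * log 2 (pv \<mu> S Y (Y \<omega>) / pv \<mu> S (\<lambda>\<omega>. (X \<omega>, Y \<omega>)) (X \<omega>, Y \<omega>)))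
     + (\<Sum>\<omega>\<in>S. \<mu>2 \<omega> * log 2 (pv \<mu> S Y (Y \<omega>) / pv \<mu> S (\<lambda>\<omega>. (X \<omega>, Y \<omega>)) (X \<omega>, Y \<omega>)))"
    unfolding Hc_def sum.distrib[symmetric] by (intro sum.cong refl) (simp add: mu algebra_simps)
  then show ?thesis using half_mix[OF fS nn1 nn2 mu, of Y X] half_mix[OF fS nn2 nn1 mu', of Y X] by linarith
qed



lemma ln2_ge_half: "1/2 \<le> ln (2::real)"
proof -
  have "ln (1/2::real) \<le> 1/2 - 1" by (rule ln_le_minus_one) simp
  then show ?thesis by (simp add: ln_div)
qed

lemma pw_ln:
  fixes a s :: real
  assumes "0 \<le> a" "a \<le> s" "0 < s"
  shows "a * (ln 2 + 1 - 2 * a / s) \<le> a * ln (s / a)"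
proof (cases "a = 0")
  case False
  then have a: "0 < a" using assms by (auto simp: less_le)
  have "ln (2 * a / s) \<le> 2 * a / s - 1" using a assms by (intro ln_le_minus_one) simp
  moreover have "ln (2 * a / s) = ln 2 - ln (s / a)" using a assms by (simp add: ln_div ln_mult)
  ultimately have "ln 2 + 1 - 2 * a / s \<le> ln (s / a)" by linarith
  then show ?thesis using a by (intro mult_left_mono) auto
qed simp

lemma sq_sum_le: fixes x y a b :: real assumes "x^2 = a" "y^2 = b"
  shows "(x + y)^2 \<le> 2 * (a + b)"
proof -
  have "2 * (a + b) - (x + y)^2 = (x - y)^2" unfolding assms[symmetric] by (simp add: power2_eq_square algebra_simps)
  moreover have "0 \<le> (x - y)^2" by simp
  ultimately show ?thesis by (simp add: algebra_simps)
qed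

lemma pw_bin:
  fixes a b :: real
  assumes a: "0 \<le> a" and b: "0 \<le> b"
  shows "(a + b) - 4 * ((a + b) - 2 * (a + b) * sqrt (a / (a + b) * (b / (a + b))))
     \<le> b * log 2 ((a + b) / b) + a * log 2 ((a + b) / a)"
proof (cases "a + b = 0")
  case True
  then have "a = 0" "b = 0" using a b by linarith+
  then show ?thesis by simp
next
  case False
  define s where "s = a + b"
  have s: "0 < s" using False a b s_def by simp
  have h1: "a * (ln 2 + 1 - 2 * a / s) \<le> a * ln (s / a)" using pw_ln[OF a _ s] b s_def by simp
  have h2: "b * (ln 2 + 1 - 2 * b / s) \<le> b * ln (s / b)" using pw_ln[OF b _ s] a s_def by simp
  have e1: "a * (ln 2 + 1 - 2 * a / s) + b * (ln 2 + 1 - 2 * b / s) = s * ln 2 - (a - b)^2 / s"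
  proof -
    have q: "(a - b)^2 = 2 * (a^2 + b^2) - s * s" unfolding s_def by (simp add: power2_eq_square algebra_simps)
    have q2: "(a - b)^2 / s = 2 * (a^2 + b^2) / s - s" using s by (simp add: q diff_divide_distrib)
    have q3: "a * (2 * a / s) + b * (2 * b / s) = 2 * (a^2 + b^2) / s"
      by (simp add: power2_eq_square add_divide_distrib mult.left_commute)
    have H: "a * (ln 2 + 1 - 2 * a / s) + b * (ln 2 + 1 - 2 * b / s) = s * ln 2 + s - (a * (2 * a / s) + b * (2 * b / s))"
      unfolding s_def by (simp add: algebra_simps)
    show ?thesis using H q2 q3 by linarith
  qed
  have L: "s * ln 2 - (a - b)^2 / s \<le> a * ln (s / a) + b * ln (s / b)" using h1 h2 e1 by linarith
  have ln2: "0 < ln (2::real)" by simp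
  have L2: "s - (a - b)^2 / (s * ln 2) \<le> b * log 2 (s / b) + a * log 2 (s / a)"
  proof -
    have "(s * ln 2 - (a - b)^2 / s) / ln 2 \<le> (a * ln (s / a) + b * ln (s / b)) / ln 2"
      using L ln2 by (intro divide_right_mono) auto
    then show ?thesis using ln2 s by (simp add: log_def field_simps)
  qed
  define x where "x = sqrt a"
  define y where "y = sqrt b"
  have xa: "x^2 = a" "0 \<le> x" using a unfolding x_def by simp_all
  have yb: "y^2 = b" "0 \<le> y" using b unfolding y_def by simp_all
  have sq: "s * sqrt (a / s * (b / s)) = x * y"
    using s a b unfolding x_def y_def by (simp add: real_sqrt_mult real_sqrt_divide)
  have r1: "s - 2 * (x * y) = (x - y)^2" using xa yb unfolding s_def by (simp add: power2_eq_square algebra_simps)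
  have r2: "(a - b)^2 = (x - y)^2 * (x + y)^2" using xa yb by (simp add: power2_eq_square algebra_simps)
  have r3: "(x + y)^2 \<le> 2 * s" using sq_sum_le[OF xa(1) yb(1)] unfolding s_def .
  have "(a - b)^2 / (s * ln 2) \<le> (x - y)^2 * (2 * s) / (s * ln 2)"
    unfolding r2 using r3 s ln2 by (intro divide_right_mono mult_left_mono) auto
  also have "\<dots> = 2 * (x - y)^2 / ln 2" using s by simp
  also have "\<dots> \<le> 4 * (x - y)^2"
  proof -
    have "2 \<le> 4 * ln (2::real)" using ln2_ge_half by linarith
    then have "2 * (x - y)^2 \<le> (4 * ln 2) * (x - y)^2" by (intro mult_right_mono) auto
    then show ?thesis using ln2 by (simp add: divide_le_eq algebra_simps)
  qed
  finally have H: "(a - b)^2 / (s * ln 2) \<le> 4 * (s - 2 * (s * sqrt (a / s * (b / s))))" unfolding sq r1 .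
  have "s - 4 * (s - 2 * s * sqrt (a / s * (b / s))) \<le> s - (a - b)^2 / (s * ln 2)"
    using H by (simp add: mult.assoc)
  then show ?thesis using L2 unfolding s_def by (rule order_trans)
qed



lemma sum_split_pred:
  "finite S \<Longrightarrow> (\<Sum>\<omega>\<in>{\<omega>\<in>S. P \<omega>}. f \<omega>) = (\<Sum>\<omega>\<in>{\<omega>\<in>S. P \<omega> \<and> Q \<omega>}. f \<omega>) + (\<Sum>\<omega>\<in>{\<omega>\<in>S. P \<omega> \<and> \<not> Q \<omega>}. f \<omega>)"
  by (subst sum.union_disjoint[symmetric]) (auto intro!: sum.cong)

lemma binary:
  fixes X :: "'o \<Rightarrow> bool"
  assumes fS: "finite S" and nn: "\<forall>\<omega>\<in>S. 0 \<le> \<mu> \<omega>"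
  shows "(\<Sum>\<omega>\<in>S. \<mu> \<omega>) - 4 * ((\<Sum>\<omega>\<in>S. \<mu> \<omega>) - bhatt \<mu> S X Y) \<le> Hc \<mu> S X Y"
proof -
  define A where "A = (\<lambda>y. prb \<mu> S (\<lambda>\<omega>. X \<omega> = False \<and> Y \<omega> = y))"
  define B where "B = (\<lambda>y. prb \<mu> S (\<lambda>\<omega>. X \<omega> = True \<and> Y \<omega> = y))"
  have sAB: "prb \<mu> S (\<lambda>\<omega>. Y \<omega> = y) = A y + B y" for y
    unfolding A_def B_def prb_def using sum_split_pred[OF fS, where P="\<lambda>\<omega>. Y \<omega> = y" and Q=X and f=\<mu>]
    by (simp add: conj_commute add.commute)
  have A0: "0 \<le> A y" "0 \<le> B y" for y unfolding A_def B_def using prb_nonneg nn by blast+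
  have pvA: "pv \<mu> S (\<lambda>\<omega>. (X \<omega>, Y \<omega>)) (False, y) = A y" "pv \<mu> S (\<lambda>\<omega>. (X \<omega>, Y \<omega>)) (True, y) = B y" for y
    unfolding A_def B_def pv_def by (auto intro!: prb_cong)
  have pvY: "pv \<mu> S Y y = A y + B y" for y using sAB unfolding pv_def .
  have "Hc \<mu> S X Y = (\<Sum>y\<in>Y ` S. \<Sum>\<omega>\<in>{\<omega>\<in>S. Y \<omega> = y}. \<mu> \<omega> * log 2 (pv \<mu> S Y (Y \<omega>) / pv \<mu> S (\<lambda>\<omega>. (X \<omega>, Y \<omega>)) (X \<omega>, Y \<omega>)))"
    unfolding Hc_def by (rule sum.image_gen[OF fS])
  also have "\<dots> = (\<Sum>y\<in>Y ` S. B y * log 2 ((A y + B y) / B y) + A y * log 2 ((A y + B y) / A y))"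
  proof (intro sum.cong refl)
    fix y assume "y \<in> Y ` S"
    have "(\<Sum>\<omega>\<in>{\<omega>\<in>S. Y \<omega> = y \<and> X \<omega>}. \<mu> \<omega> * log 2 (pv \<mu> S Y (Y \<omega>) / pv \<mu> S (\<lambda>\<omega>. (X \<omega>, Y \<omega>)) (X \<omega>, Y \<omega>)))
      = (\<Sum>\<omega>\<in>{\<omega>\<in>S. Y \<omega> = y \<and> X \<omega>}. \<mu> \<omega> * log 2 ((A y + B y) / B y))"
      by (intro sum.cong refl) (auto simp: pvA pvY)
    also have "\<dots> = B y * log 2 ((A y + B y) / B y)"
      unfolding sum_distrib_right[symmetric] B_def prb_def by (rule arg_cong2[where f="(*)"], rule sum.cong) auto
    finally have 1: "(\<Sum>\<omega>\<in>{\<omega>\<in>S. Y \<omega> = y \<and> X \<omega>}. \<mu> \<omega> * log 2 (pv \<mu> S Y (Y \<omega>) / pv \<mu> S (\<lambda>\<omega>. (X \<omega>, Y \<omega>)) (X \<omega>, Y \<omega>)))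
      = B y * log 2 ((A y + B y) / B y)" .
    have "(\<Sum>\<omega>\<in>{\<omega>\<in>S. Y \<omega> = y \<and> \<not> X \<omega>}. \<mu> \<omega> * log 2 (pv \<mu> S Y (Y \<omega>) / pv \<mu> S (\<lambda>\<omega>. (X \<omega>, Y \<omega>)) (X \<omega>, Y \<omega>)))
      = (\<Sum>\<omega>\<in>{\<omega>\<in>S. Y \<omega> = y \<and> \<not> X \<omega>}. \<mu> \<omega> * log 2 ((A y + B y) / A y))"
      by (intro sum.cong refl) (auto simp: pvA pvY)
    also have "\<dots> = A y * log 2 ((A y + B y) / A y)"
      unfolding sum_distrib_right[symmetric] A_def prb_def by (rule arg_cong2[where f="(*)"], rule sum.cong) auto
    finally have 2: "(\<Sum>\<omega>\<in>{\<omega>\<in>S. Y \<omega> = y \<and> \<not> X \<omega>}. \<mu> \<omega> * log 2 (pv \<mu> S Y (Y \<omega>) / pv \<mu> S (\<lambda>\<omega>. (X \<omega>, Y \<omega>)) (X \<omega>, Y \<omega>)))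
      = A y * log 2 ((A y + B y) / A y)" .
    show "(\<Sum>\<omega>\<in>{\<omega>\<in>S. Y \<omega> = y}. \<mu> \<omega> * log 2 (pv \<mu> S Y (Y \<omega>) / pv \<mu> S (\<lambda>\<omega>. (X \<omega>, Y \<omega>)) (X \<omega>, Y \<omega>)))
      = B y * log 2 ((A y + B y) / B y) + A y * log 2 ((A y + B y) / A y)"
      by (subst sum_split_pred[OF fS, where P="\<lambda>\<omega>. Y \<omega> = y" and Q=X]) (simp only: 1 2)
  qed
  also have "\<dots> \<ge> (\<Sum>y\<in>Y ` S. (A y + B y) - 4 * ((A y + B y) - 2 * (A y + B y) * sqrt (A y / (A y + B y) * (B y / (A y + B y)))))"
    by (intro sum_mono pw_bin A0)
  finally have L: "(\<Sum>y\<in>Y ` S. (A y + B y) - 4 * ((A y + B y) - 2 * (A y + B y) * sqrt (A y / (A y + B y) * (B y / (A y + B y))))) \<le> Hc \<mu> S X Y" .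
  have m: "(\<Sum>y\<in>Y ` S. A y + B y) = (\<Sum>\<omega>\<in>S. \<mu> \<omega>)"
    using sum_pv[OF fS, where V=Y and \<mu>=\<mu>] unfolding pv_def sAB .
  have bh: "bhatt \<mu> S X Y = (\<Sum>y\<in>Y ` S. 2 * (A y + B y) * sqrt (A y / (A y + B y) * (B y / (A y + B y))))"
  proof -
    have A': "prb \<mu> S (\<lambda>\<omega>. \<not> X \<omega> \<and> Y \<omega> = y) = A y" "prb \<mu> S (\<lambda>\<omega>. X \<omega> \<and> Y \<omega> = y) = B y" for y
      by (simp_all add: A_def B_def)
    show ?thesis unfolding bhatt_def sAB by (simp add: sum_distrib_left mult.assoc A' algebra_simps)
  qed
  have "(\<Sum>y\<in>Y ` S. (A y + B y) - 4 * ((A y + B y) - 2 * (A y + B y) * sqrt (A y / (A y + B y) * (B y / (A y + B y)))))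
     = (\<Sum>\<omega>\<in>S. \<mu> \<omega>) - 4 * ((\<Sum>\<omega>\<in>S. \<mu> \<omega>) - bhatt \<mu> S X Y)"
    unfolding bh m[symmetric] by (simp only: sum_subtractf[symmetric] sum_distrib_left)
  then show ?thesis using L by simp
qed



lemma mi_form:
  assumes fS: "finite S"
  shows "mutinf \<mu> S A B = (\<Sum>\<omega>\<in>S. \<mu> \<omega> * log 2 (pv \<mu> S (\<lambda>\<omega>. (A \<omega>, B \<omega>)) (A \<omega>, B \<omega>) / (pv \<mu> S A (A \<omega>) * pv \<mu> S B (B \<omega>))))"
proof -
  define W where "W = (\<lambda>\<omega>. (A \<omega>, B \<omega>))"
  define L where "L = (\<lambda>w. log 2 (pv \<mu> S W w / (pv \<mu> S A (fst w) * pv \<mu> S B (snd w))))"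
  have "(\<Sum>\<omega>\<in>S. \<mu> \<omega> * L (W \<omega>)) = (\<Sum>w\<in>A ` S \<times> B ` S. \<Sum>\<omega>\<in>{\<omega>. \<omega> \<in> S \<and> W \<omega> = w}. \<mu> \<omega> * L (W \<omega>))"
    by (rule sum.group[symmetric]) (use fS in \<open>auto simp: W_def\<close>)
  also have "\<dots> = (\<Sum>w\<in>A ` S \<times> B ` S. pv \<mu> S W w * L w)"
  proof (intro sum.cong refl)
    fix w
    have "(\<Sum>\<omega>\<in>{\<omega>. \<omega> \<in> S \<and> W \<omega> = w}. \<mu> \<omega> * L (W \<omega>)) = (\<Sum>\<omega>\<in>{\<omega>. \<omega> \<in> S \<and> W \<omega> = w}. \<mu> \<omega> * L w)"
      by (intro sum.cong) auto
    then show "(\<Sum>\<omega>\<in>{\<omega>. \<omega> \<in> S \<and> W \<omega> = w}. \<mu> \<omega> * L (W \<omega>)) = pv \<mu> S W w * L w"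
      by (simp add: pv_def prb_def sum_distrib_right)
  qed
  also have "\<dots> = (\<Sum>a\<in>A ` S. \<Sum>b\<in>B ` S. pv \<mu> S W (a, b) * L (a, b))"
    by (rule sum.cartesian_product')
  also have "\<dots> = mutinf \<mu> S A B"
    unfolding mutinf_def L_def W_def pv_def by (intro sum.cong refl) (simp add: prb_def)
  finally show ?thesis unfolding L_def W_def by simp
qed

lemma mi_nonneg:
  assumes fS: "finite S" and nn: "\<forall>\<omega>\<in>S. 0 \<le> \<mu> \<omega>" and one: "(\<Sum>\<omega>\<in>S. \<mu> \<omega>) = 1"
  shows "0 \<le> mutinf \<mu> S A B"
proof -
  define W where "W = (\<lambda>\<omega>. (A \<omega>, B \<omega>))"
  define F where "F = (\<lambda>\<omega>. pv \<mu> S W (W \<omega>) / (pv \<mu> S A (A \<omega>) * pv \<mu> S B (B \<omega>)))"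
  have Fpos: "0 < F \<omega>" if "\<omega> \<in> S" "0 < \<mu> \<omega>" for \<omega>
    using pv_pos[OF fS nn that, of W] pv_pos[OF fS nn that, of A] pv_pos[OF fS nn that, of B]
    unfolding F_def by simp
  have g: "(\<Sum>\<omega>\<in>S. \<mu> \<omega> * log 2 (F \<omega>)) \<ge> ((\<Sum>\<omega>\<in>S. \<mu> \<omega>) - (\<Sum>\<omega>\<in>S. \<mu> \<omega> / F \<omega>)) / ln 2"
    by (rule gibbs[OF fS nn Fpos])
  define G where "G = (\<lambda>w. pv \<mu> S A (fst w) * pv \<mu> S B (snd w) / pv \<mu> S W w)"
  have "(\<Sum>\<omega>\<in>S. \<mu> \<omega> / F \<omega>) = (\<Sum>\<omega>\<in>S. \<mu> \<omega> * G (W \<omega>))"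
    unfolding F_def G_def W_def by (intro sum.cong) auto
  also have "\<dots> = (\<Sum>w\<in>W ` S. pv \<mu> S W w * G w)"
    by (rule E_lemma[OF fS])
  also have "\<dots> \<le> (\<Sum>w\<in>W ` S. pv \<mu> S A (fst w) * pv \<mu> S B (snd w))"
  proof (intro sum_mono)
    fix w
    show "pv \<mu> S W w * G w \<le> pv \<mu> S A (fst w) * pv \<mu> S B (snd w)"
      using pv_nonneg[OF nn, of A "fst w"] pv_nonneg[OF nn, of B "snd w"] unfolding G_def
      by (cases "pv \<mu> S W w = 0") auto
  qed
  also have "\<dots> \<le> (\<Sum>w\<in>A ` S \<times> B ` S. pv \<mu> S A (fst w) * pv \<mu> S B (snd w))"
    by (intro sum_mono2) (use fS pv_nonneg[OF nn, of A] pv_nonneg[OF nn, of B] in \<open>auto simp: W_def\<close>)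
  also have "\<dots> = (\<Sum>a\<in>A ` S. pv \<mu> S A a) * (\<Sum>b\<in>B ` S. pv \<mu> S B b)"
    unfolding sum.cartesian_product' by (simp add: sum_product)
  also have "\<dots> = 1" using one by (simp add: sum_pv[OF fS])
  finally have "0 \<le> (\<Sum>\<omega>\<in>S. \<mu> \<omega> * log 2 (F \<omega>))" using g one
    by (smt (verit) divide_nonneg_pos ln_gt_zero)
  then show ?thesis unfolding mi_form[OF fS] F_def W_def .
qed

lemma mi_decomp:
  assumes fS: "finite S" and nn: "\<forall>\<omega>\<in>S. 0 \<le> \<mu> \<omega>" and one: "(\<Sum>\<omega>\<in>S. \<mu> \<omega>) = 1"
    and ev: "\<forall>\<omega>\<in>S. \<forall>\<omega>'\<in>S. ((Wv \<omega>', TA \<omega>', B0 \<omega>') = (Wv \<omega>, TA \<omega>, B0 \<omega>)) = ((R \<omega>', B0 \<omega>') = (R \<omega>, B0 \<omega>))"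
  shows "mutinf \<mu> S Wv (\<lambda>\<omega>. (TA \<omega>, B0 \<omega>)) = Hc \<mu> S Wv (\<lambda>_. ()) + Hc \<mu> S TA B0 - Hc \<mu> S R B0"
  unfolding mi_form[OF fS] Hc_def sum.distrib[symmetric] sum_subtractf[symmetric]
proof (intro sum.cong refl)
  fix \<omega> assume w: "\<omega> \<in> S"
  have e1: "pv \<mu> S (\<lambda>\<omega>. (Wv \<omega>, TA \<omega>, B0 \<omega>)) (Wv \<omega>, TA \<omega>, B0 \<omega>) = pv \<mu> S (\<lambda>\<omega>. (R \<omega>, B0 \<omega>)) (R \<omega>, B0 \<omega>)"
    unfolding pv_def by (rule prb_cong) (use ev w in auto)
  have e2: "pv \<mu> S (\<lambda>_. ()) () = 1" using one by (simp add: pv_def prb_def)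
  have e3: "pv \<mu> S (\<lambda>\<omega>. (Wv \<omega>, ())) (Wv \<omega>, ()) = pv \<mu> S Wv (Wv \<omega>)" by (simp add: pv_def)
  show "\<mu> \<omega> * log 2 (pv \<mu> S (\<lambda>\<omega>. (Wv \<omega>, TA \<omega>, B0 \<omega>)) (Wv \<omega>, TA \<omega>, B0 \<omega>) / (pv \<mu> S Wv (Wv \<omega>) * pv \<mu> S (\<lambda>\<omega>. (TA \<omega>, B0 \<omega>)) (TA \<omega>, B0 \<omega>))) =
    \<mu> \<omega> * log 2 (pv \<mu> S (\<lambda>_. ()) () / pv \<mu> S (\<lambda>\<omega>. (Wv \<omega>, ())) (Wv \<omega>, ())) +
    \<mu> \<omega> * log 2 (pv \<mu> S B0 (B0 \<omega>) / pv \<mu> S (\<lambda>\<omega>. (TA \<omega>, B0 \<omega>)) (TA \<omega>, B0 \<omega>)) -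
    \<mu> \<omega> * log 2 (pv \<mu> S B0 (B0 \<omega>) / pv \<mu> S (\<lambda>\<omega>. (R \<omega>, B0 \<omega>)) (R \<omega>, B0 \<omega>))"
  proof (cases "\<mu> \<omega> = 0")
    case False
    then have m: "0 < \<mu> \<omega>" using nn w by fastforce
    have p: "0 < pv \<mu> S (\<lambda>\<omega>. (R \<omega>, B0 \<omega>)) (R \<omega>, B0 \<omega>)" "0 < pv \<mu> S Wv (Wv \<omega>)"
      "0 < pv \<mu> S (\<lambda>\<omega>. (TA \<omega>, B0 \<omega>)) (TA \<omega>, B0 \<omega>)" "0 < pv \<mu> S B0 (B0 \<omega>)"
      using pv_pos[OF fS nn w m, of "\<lambda>\<omega>. (R \<omega>, B0 \<omega>)"] pv_pos[OF fS nn w m, of Wv]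
        pv_pos[OF fS nn w m, of "\<lambda>\<omega>. (TA \<omega>, B0 \<omega>)"] pv_pos[OF fS nn w m, of B0] by auto
    show ?thesis unfolding e1 e2 e3 using p by (simp add: log_divide log_mult algebra_simps)
  qed simp
qed

lemma Hc_le_bits:
  assumes fS: "finite S" and nn: "\<forall>\<omega>\<in>S. 0 \<le> \<mu> \<omega>" and c: "card (X ` S) \<le> 2 ^ k"
  shows "Hc \<mu> S X Y \<le> (\<Sum>\<omega>\<in>S. \<mu> \<omega>) * real k"
proof (cases "S = {}")
  case True then show ?thesis by (simp add: Hc_def)
next
  case False
  then have c0: "0 < card (X ` S)" using fS by (simp add: card_gt_0_iff)
  have "log 2 (real (card (X ` S))) \<le> log 2 (2 ^ k)"
    using c c0 by (subst log_le_cancel_iff) (auto simp del: of_nat_power simp: of_nat_power[symmetric])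
  also have "\<dots> = real k" by (simp add: log_nat_power)
  finally have "(\<Sum>\<omega>\<in>S. \<mu> \<omega>) * log 2 (real (card (X ` S))) \<le> (\<Sum>\<omega>\<in>S. \<mu> \<omega>) * real k"
    using nn by (intro mult_left_mono sum_nonneg) auto
  then show ?thesis using Hc_le_card[OF fS nn, of X Y] by linarith
qed

lemma card_restrict_image:
  fixes T :: "'o \<Rightarrow> 'i \<Rightarrow> bool"
  assumes "finite J"
  shows "card ((\<lambda>\<omega>. restrict (T \<omega>) J) ` S) \<le> 2 ^ card J"
proof -
  have "(\<lambda>\<omega>. restrict (T \<omega>) J) ` S \<subseteq> PiE J (\<lambda>_. (UNIV :: bool set))" by auto
  moreover have "finite (PiE J (\<lambda>_. (UNIV :: bool set)))" using assms by (simp add: finite_PiE)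
  ultimately have "card ((\<lambda>\<omega>. restrict (T \<omega>) J) ` S) \<le> card (PiE J (\<lambda>_. (UNIV :: bool set)))"
    by (rule card_mono[rotated])
  also have "\<dots> = 2 ^ card J" using assms by (simp add: card_PiE)
  finally show ?thesis .
qed

lemma restrict_insert_eq:
  "(restrict f (insert b A) = restrict g (insert b A)) = (f b = g b \<and> restrict f A = restrict g A)"
  by (auto simp: restrict_def fun_eq_iff split: if_splits)

lemma chain_bound:
  fixes T :: "'o \<Rightarrow> nat \<Rightarrow> bool"
  assumes fS: "finite S" and nn: "\<forall>\<omega>\<in>S. 0 \<le> \<mu> \<omega>" and fJ: "finite J"
  shows "(\<Sum>i\<in>J. Hc \<mu> S (\<lambda>\<omega>. T \<omega> i) (\<lambda>\<omega>. (map (T \<omega>) [0..<i], B0 \<omega>))) \<le> Hc \<mu> S (\<lambda>\<omega>. restrict (T \<omega>) J) B0"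
  using fJ
proof (induction J rule: finite_linorder_max_induct)
  case empty
  then show ?case using Hc_nonneg[OF fS nn] by simp
next
  case (insert b A)
  have bA: "b \<notin> A" using insert by auto
  have ch: "Hc \<mu> S (\<lambda>\<omega>. restrict (T \<omega>) (insert b A)) B0
      = Hc \<mu> S (\<lambda>\<omega>. restrict (T \<omega>) A) B0 + Hc \<mu> S (\<lambda>\<omega>. T \<omega> b) (\<lambda>\<omega>. (restrict (T \<omega>) A, B0 \<omega>))"
    by (rule chain[OF fS nn]) (simp add: restrict_insert_eq)
  have mo: "Hc \<mu> S (\<lambda>\<omega>. T \<omega> b) (\<lambda>\<omega>. (map (T \<omega>) [0..<b], B0 \<omega>)) \<le> Hc \<mu> S (\<lambda>\<omega>. T \<omega> b) (\<lambda>\<omega>. (restrict (T \<omega>) A, B0 \<omega>))"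
  proof (rule Hc_mono[OF fS nn, where f="\<lambda>(pre, z). (restrict (\<lambda>k. pre ! k) A, z)"])
    show "\<forall>\<omega>\<in>S. (restrict (T \<omega>) A, B0 \<omega>) = (\<lambda>(pre, z). (restrict (\<lambda>k. pre ! k) A, z)) (map (T \<omega>) [0..<b], B0 \<omega>)"
      using insert(2) by (auto intro!: restrict_ext)
  qed
  have si: "(\<Sum>i\<in>insert b A. Hc \<mu> S (\<lambda>\<omega>. T \<omega> i) (\<lambda>\<omega>. (map (T \<omega>) [0..<i], B0 \<omega>)))
     = Hc \<mu> S (\<lambda>\<omega>. T \<omega> b) (\<lambda>\<omega>. (map (T \<omega>) [0..<b], B0 \<omega>)) + (\<Sum>i\<in>A. Hc \<mu> S (\<lambda>\<omega>. T \<omega> i) (\<lambda>\<omega>. (map (T \<omega>) [0..<i], B0 \<omega>)))"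
    by (rule sum.insert[OF insert(1) bA])
  show ?case unfolding si ch using insert(3) mo by linarith
qed

lemma tangent:
  assumes "0 \<le> m" "0 < y"
  shows "m * log 2 (1 / m) \<le> m * log 2 (1 / y) + (y - m) / ln 2"
proof (cases "m = 0")
  case True then show ?thesis using assms by simp
next
  case False
  then have m: "0 < m" using assms by simp
  have "ln (y / m) \<le> y / m - 1" using m assms by (intro ln_le_minus_one) simp
  then have "m * ln (y / m) \<le> m * (y / m - 1)" using m by (intro mult_left_mono) auto
  then have "m * ln (y / m) \<le> y - m" using m by (simp add: algebra_simps)
  then have "m * ln (y / m) / ln 2 \<le> (y - m) / ln 2" by (intro divide_right_mono) auto
  moreover have "m * log 2 (1 / m) = m * log 2 (1 / y) + m * ln (y / m) / ln 2"
    using m assms by (simp add: log_def ln_div algebra_simps diff_divide_distrib)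
  ultimately show ?thesis by linarith
qed



lemma iid_sum:
  fixes p :: "'a \<Rightarrow> real"
  assumes "finite \<Omega>"
  shows "(\<Sum>\<omega>\<in>{\<omega>. length \<omega> = N \<and> set \<omega> \<subseteq> \<Omega>}. prod_list (map p \<omega>)) = (\<Sum>w\<in>\<Omega>. p w) ^ N"
proof (induction N)
  case 0
  have "{\<omega>::'a list. length \<omega> = 0 \<and> set \<omega> \<subseteq> \<Omega>} = {[]}" by auto
  then show ?case by simp
next
  case (Suc N)
  define L where "L = {\<omega>. length \<omega> = N \<and> set \<omega> \<subseteq> \<Omega>}"
  have fL: "finite L" unfolding L_def using finite_lists_length_eq[OF assms, of N]
    by (simp add: conj_commute)
  have eq: "{\<omega>. length \<omega> = Suc N \<and> set \<omega> \<subseteq> \<Omega>} = (\<lambda>(w, \<omega>). w # \<omega>) ` (\<Omega> \<times> L)"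
  proof
    show "{\<omega>. length \<omega> = Suc N \<and> set \<omega> \<subseteq> \<Omega>} \<subseteq> (\<lambda>(w, \<omega>). w # \<omega>) ` (\<Omega> \<times> L)"
    proof
      fix \<omega> assume "\<omega> \<in> {\<omega>. length \<omega> = Suc N \<and> set \<omega> \<subseteq> \<Omega>}"
      then obtain y ys where "\<omega> = y # ys" "length ys = N" "set (y # ys) \<subseteq> \<Omega>"
        by (auto simp: length_Suc_conv)
      then show "\<omega> \<in> (\<lambda>(w, \<omega>). w # \<omega>) ` (\<Omega> \<times> L)" unfolding L_def by force
    qed
  qed (auto simp: L_def)
  have inj: "inj_on (\<lambda>(w, \<omega>). w # \<omega>) (\<Omega> \<times> L)" by (auto simp: inj_on_def)
  have "(\<Sum>\<omega>\<in>{\<omega>. length \<omega> = Suc N \<and> set \<omega> \<subseteq> \<Omega>}. prod_list (map p \<omega>))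
     = (\<Sum>x\<in>\<Omega> \<times> L. prod_list (map p ((\<lambda>(w, \<omega>). w # \<omega>) x)))"
    unfolding eq by (rule sum.reindex[OF inj, unfolded comp_def])
  also have "\<dots> = (\<Sum>w\<in>\<Omega>. \<Sum>\<omega>\<in>L. p w * prod_list (map p \<omega>))"
    unfolding sum.cartesian_product' by simp
  also have "\<dots> = (\<Sum>w\<in>\<Omega>. p w) * (\<Sum>\<omega>\<in>L. prod_list (map p \<omega>))"
    by (simp add: sum_distrib_left sum_distrib_right sum.swap[of _ L])
  also have "\<dots> = (\<Sum>w\<in>\<Omega>. p w) ^ Suc N" using Suc unfolding L_def by simp
  finally show ?case .
qed

lemma restrict_split_eq:
  assumes "A \<subseteq> I"
  shows "(restrict f (I - A) = restrict g (I - A) \<and> restrict f A = restrict g A) = (restrict f I = restrict g I)"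
  using assms by (auto simp: restrict_def fun_eq_iff split: if_splits)



lemma div_ln2_le: "0 \<le> x \<Longrightarrow> x / ln 2 \<le> 2 * (x::real)"
proof -
  assume x: "0 \<le> x"
  have "1/2 \<le> ln (2::real)" by (rule ln2_ge_half)
  then have "1 \<le> 2 * ln (2::real)" by simp
  then have "x * 1 \<le> x * (2 * ln 2)" using x by (rule mult_left_mono)
  then show ?thesis by (simp add: divide_le_eq algebra_simps)
qed

lemma lin1: "s - 4 * (s - b) \<le> h \<Longrightarrow> 1 - d \<le> b \<Longrightarrow> s = 1 \<Longrightarrow> 1 - 4 * d \<le> (h::real)"
  by argo

lemma lin2: "m \<le> c - h \<Longrightarrow> c * (1 - 4*d) - e*c - a - b - f \<le> h \<Longrightarrow> m \<le> 4*d*c + e*c + a + b + (f::real)"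
  by (simp add: algebra_simps)

lemma lin3: "x \<le> d * P \<Longrightarrow> d * P \<le> d * (10 * K) \<Longrightarrow> x \<le> 10 * K * (d::real)"
  by (simp add: algebra_simps)

lemma core:
  fixes X :: "'x set" and Z :: "'z set" and p :: "bool \<times> bool \<times> 'x \<times> 'z \<Rightarrow> real"
    and Q :: "(bool \<times> bool \<times> 'x \<times> 'z) list \<Rightarrow> real" and \<beta> :: real
  assumes b0: "0 < \<beta>" and b1: "\<beta> < 1/2" and fX: "finite X" and fZ: "finite Z"
    and pnn: "\<forall>w. p w \<ge> 0" and psum: "(\<Sum>w\<in>UNIV \<times> UNIV \<times> X \<times> Z. p w) = 1"
    and Qnn: "\<forall>\<omega>\<in>outcomes (2 ^ n) X Z. Q \<omega> \<ge> 0"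
    and Qsum: "(\<Sum>\<omega>\<in>outcomes (2 ^ n) X Z. Q \<omega>) = 1"
    and L1: "(\<Sum>\<omega>\<in>outcomes (2 ^ n) X Z. \<bar>iid p \<omega> - Q \<omega>\<bar>) \<le> 2 * real (2 ^ n) * 2 powr (- (real (2 ^ n) powr \<beta>))"
    and IH: "\<I> \<subseteq> Hset \<beta> n p X Z" and AI: "\<A> \<subseteq> \<I>"
  shows "\<bar>mutinf Q (outcomes (2 ^ n) X Z) (\<lambda>\<omega>. restrict (Tv n \<omega>) (\<I> - \<A>)) (\<lambda>\<omega>. (restrict (Tv n \<omega>) \<A>, Uv \<omega>, Zv \<omega>))\<bar>
     \<le> 10 * real (2 ^ n) ^ 3 * 2 powr (- (real (2 ^ n) powr \<beta>))"
proof -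
  define N :: real where "N = real (2 ^ n)"
  define \<delta> where "\<delta> = 2 powr (- (N powr \<beta>))"
  define S where "S = outcomes (2 ^ n) X Z"
  define P where "P = iid p"
  have N1: "1 \<le> N" unfolding N_def by simp
  have d0: "0 < \<delta>" unfolding \<delta>_def by simp
  have fS: "finite S"
  proof -
    have "finite (UNIV \<times> UNIV \<times> X \<times> Z :: (bool \<times> bool \<times> 'x \<times> 'z) set)" using fX fZ by simp
    from finite_lists_length_eq[OF this, of "2^n"] show ?thesis unfolding S_def outcomes_def by (simp add: conj_commute)
  qed
  have nnP: "\<forall>\<omega>\<in>S. 0 \<le> P \<omega>" unfolding P_def iid_def using pnn by (auto intro!: prod_list_nonneg)
  have sumP: "(\<Sum>\<omega>\<in>S. P \<omega>) = 1" unfolding P_def iid_def S_def outcomes_def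
    using iid_sum[of "UNIV \<times> UNIV \<times> X \<times> Z" p "2^n"] fX fZ psum by simp
  have Qnn': "\<forall>\<omega>\<in>S. 0 \<le> Q \<omega>" using Qnn unfolding S_def by simp
  have Qsum': "(\<Sum>\<omega>\<in>S. Q \<omega>) = 1" using Qsum unfolding S_def .
  have Isub: "\<I> \<subseteq> {..<2^n}" using IH unfolding Hset_def by auto
  then have fI: "finite \<I>" by (rule finite_subset) simp
  have cI: "real (card \<I>) \<le> N" unfolding N_def using card_mono[OF _ Isub] by simp
  define R where "R = (\<lambda>\<omega>::(bool \<times> bool \<times> 'x \<times> 'z) list. restrict (Tv n \<omega>) \<I>)"
  define B0 where "B0 = (\<lambda>\<omega>::(bool \<times> bool \<times> 'x \<times> 'z) list. (Uv \<omega>, Zv \<omega>))"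

  have Pside: "real (card \<I>) * (1 - 4 * \<delta>) \<le> Hc P S R B0"
  proof -
    have cb: "(\<Sum>i\<in>\<I>. Hc P S (\<lambda>\<omega>. Tv n \<omega> i) (\<lambda>\<omega>. (map (Tv n \<omega>) [0..<i], B0 \<omega>))) \<le> Hc P S R B0"
      unfolding R_def by (rule chain_bound[OF fS nnP fI])
    have "1 - 4 * \<delta> \<le> Hc P S (\<lambda>\<omega>. Tv n \<omega> i) (\<lambda>\<omega>. (map (Tv n \<omega>) [0..<i], B0 \<omega>))" if "i \<in> \<I>" for i
    proof -
      have "i \<in> Hset \<beta> n p X Z" using that IH by auto
      then have bh: "1 - \<delta> \<le> bhatt P S (\<lambda>\<omega>. Tv n \<omega> i) (\<lambda>\<omega>. (map (Tv n \<omega>) [0..<i], B0 \<omega>))"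
        unfolding Hset_def \<delta>_def N_def P_def S_def B0_def by simp
      have "(\<Sum>\<omega>\<in>S. P \<omega>) - 4 * ((\<Sum>\<omega>\<in>S. P \<omega>) - bhatt P S (\<lambda>\<omega>. Tv n \<omega> i) (\<lambda>\<omega>. (map (Tv n \<omega>) [0..<i], B0 \<omega>)))
          \<le> Hc P S (\<lambda>\<omega>. Tv n \<omega> i) (\<lambda>\<omega>. (map (Tv n \<omega>) [0..<i], B0 \<omega>))"
        by (rule binary[OF fS nnP])
      then show ?thesis using bh sumP by (rule lin1)
    qed
    then have "(\<Sum>i\<in>\<I>. 1 - 4 * \<delta>) \<le> (\<Sum>i\<in>\<I>. Hc P S (\<lambda>\<omega>. Tv n \<omega> i) (\<lambda>\<omega>. (map (Tv n \<omega>) [0..<i], B0 \<omega>)))"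
      by (rule sum_mono)
    then show ?thesis using cb by simp
  qed

  define \<mu> where "\<mu> = (\<lambda>\<omega>. min (P \<omega>) (Q \<omega>))"
  define \<alpha> where "\<alpha> = (\<lambda>\<omega>. P \<omega> - \<mu> \<omega>)"
  define \<gamma> where "\<gamma> = (\<lambda>\<omega>. Q \<omega> - \<mu> \<omega>)"
  have nnm: "\<forall>\<omega>\<in>S. 0 \<le> \<mu> \<omega>" using nnP Qnn' unfolding \<mu>_def by auto
  have nna: "\<forall>\<omega>\<in>S. 0 \<le> \<alpha> \<omega>" unfolding \<alpha>_def \<mu>_def by auto
  have nng: "\<forall>\<omega>\<in>S. 0 \<le> \<gamma> \<omega>" unfolding \<gamma>_def \<mu>_def by auto
  have Pdec: "P = (\<lambda>\<omega>. \<mu> \<omega> + \<alpha> \<omega>)" unfolding \<alpha>_def by auto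
  have Qdec: "Q = (\<lambda>\<omega>. \<mu> \<omega> + \<gamma> \<omega>)" unfolding \<gamma>_def by auto
  define \<epsilon> where "\<epsilon> = (\<Sum>\<omega>\<in>S. \<alpha> \<omega>)"
  have e0: "0 \<le> \<epsilon>" unfolding \<epsilon>_def using nna by (simp add: sum_nonneg)
  have absum: "(\<Sum>\<omega>\<in>S. \<bar>P \<omega> - Q \<omega>\<bar>) = \<epsilon> + (\<Sum>\<omega>\<in>S. \<gamma> \<omega>)"
    unfolding \<epsilon>_def sum.distrib[symmetric] by (rule sum.cong) (auto simp: \<alpha>_def \<gamma>_def \<mu>_def min_def)
  have sP: "(\<Sum>\<omega>\<in>S. P \<omega>) = (\<Sum>\<omega>\<in>S. \<mu> \<omega>) + \<epsilon>"
    unfolding \<epsilon>_def sum.distrib[symmetric] by (rule sum.cong) (auto simp: \<alpha>_def)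
  have sQ: "(\<Sum>\<omega>\<in>S. Q \<omega>) = (\<Sum>\<omega>\<in>S. \<mu> \<omega>) + (\<Sum>\<omega>\<in>S. \<gamma> \<omega>)"
    unfolding sum.distrib[symmetric] by (rule sum.cong) (auto simp: \<gamma>_def)
  have sg: "(\<Sum>\<omega>\<in>S. \<gamma> \<omega>) = \<epsilon>" using sP sQ sumP Qsum' by linarith
  have sm: "(\<Sum>\<omega>\<in>S. \<mu> \<omega>) = 1 - \<epsilon>" using sP sumP by linarith
  have ele: "\<epsilon> \<le> N * \<delta>" using L1 absum sg unfolding S_def[symmetric] P_def[symmetric] N_def[symmetric] \<delta>_def[symmetric] by linarith
  have sup: "Hc \<mu> S R B0 + Hc \<gamma> S R B0 \<le> Hc Q S R B0" by (rule superadd[OF fS nnm nng Qdec])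
  have g0: "0 \<le> Hc \<gamma> S R B0" by (rule Hc_nonneg[OF fS nng])
  have mix: "Hc P S R B0 \<le> Hc \<mu> S R B0 + Hc \<alpha> S R B0
     + (\<Sum>\<omega>\<in>S. \<mu> \<omega>) * log 2 ((\<Sum>\<omega>\<in>S. P \<omega>) / (\<Sum>\<omega>\<in>S. \<mu> \<omega>))
     + (\<Sum>\<omega>\<in>S. \<alpha> \<omega>) * log 2 ((\<Sum>\<omega>\<in>S. P \<omega>) / (\<Sum>\<omega>\<in>S. \<alpha> \<omega>))"
    by (rule mixing[OF fS nnm nna Pdec])
  have ab: "Hc \<alpha> S R B0 \<le> \<epsilon> * real (card \<I>)"
    unfolding \<epsilon>_def R_def by (rule Hc_le_bits[OF fS nna card_restrict_image[OF fI]])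
  have one_e: "0 \<le> 1 - \<epsilon>" using sm nnm by (metis sum_nonneg)
  have t1: "(1 - \<epsilon>) * log 2 (1 / (1 - \<epsilon>)) \<le> \<epsilon> / ln 2"
    using tangent[OF one_e, of 1] by simp
  have ld: "log 2 (1 / \<delta>) = N powr \<beta>" unfolding \<delta>_def by (simp add: powr_minus_divide[symmetric])
  have t2: "\<epsilon> * log 2 (1 / \<epsilon>) \<le> \<epsilon> * (N powr \<beta>) + \<delta> / ln 2"
  proof -
    have "\<epsilon> * log 2 (1 / \<epsilon>) \<le> \<epsilon> * log 2 (1 / \<delta>) + (\<delta> - \<epsilon>) / ln 2" by (rule tangent[OF e0 d0])
    moreover have "(\<delta> - \<epsilon>) / ln 2 \<le> \<delta> / ln 2" using e0 by (intro divide_right_mono) auto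
    ultimately show ?thesis unfolding ld by linarith
  qed
  have mix2: "Hc P S R B0 \<le> Hc \<mu> S R B0 + Hc \<alpha> S R B0 + (1 - \<epsilon>) * log 2 (1 / (1 - \<epsilon>)) + \<epsilon> * log 2 (1 / \<epsilon>)"
    using mix unfolding sumP sm \<epsilon>_def[symmetric] .
  have Qside: "real (card \<I>) * (1 - 4 * \<delta>) - \<epsilon> * real (card \<I>) - \<epsilon> / ln 2 - \<epsilon> * (N powr \<beta>) - \<delta> / ln 2 \<le> Hc Q S R B0"
    using Pside sup g0 mix2 ab t1 t2 by linarith

  define Wv where "Wv = (\<lambda>\<omega>::(bool \<times> bool \<times> 'x \<times> 'z) list. restrict (Tv n \<omega>) (\<I> - \<A>))"
  define TA where "TA = (\<lambda>\<omega>::(bool \<times> bool \<times> 'x \<times> 'z) list. restrict (Tv n \<omega>) \<A>)"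
  have ev: "\<forall>\<omega>\<in>S. \<forall>\<omega>'\<in>S. ((Wv \<omega>', TA \<omega>', B0 \<omega>') = (Wv \<omega>, TA \<omega>, B0 \<omega>)) = ((R \<omega>', B0 \<omega>') = (R \<omega>, B0 \<omega>))"
  proof (intro ballI)
    fix \<omega> \<omega>'
    show "((Wv \<omega>', TA \<omega>', B0 \<omega>') = (Wv \<omega>, TA \<omega>, B0 \<omega>)) = ((R \<omega>', B0 \<omega>') = (R \<omega>, B0 \<omega>))"
      using restrict_split_eq[OF AI, of "Tv n \<omega>'" "Tv n \<omega>"] unfolding Wv_def TA_def R_def by auto
  qed
  have dec: "mutinf Q S Wv (\<lambda>\<omega>. (TA \<omega>, B0 \<omega>)) = Hc Q S Wv (\<lambda>_. ()) + Hc Q S TA B0 - Hc Q S R B0"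
    by (rule mi_decomp[OF fS Qnn' Qsum' ev])
  have fIA: "finite (\<I> - \<A>)" "finite \<A>" using fI AI by (auto intro: finite_subset)
  have hW: "Hc Q S Wv (\<lambda>_. ()) \<le> real (card (\<I> - \<A>))"
    using Hc_le_bits[OF fS Qnn' card_restrict_image[OF fIA(1)], where Y="\<lambda>_. ()"] Qsum' unfolding Wv_def by simp
  have hA: "Hc Q S TA B0 \<le> real (card \<A>)"
    using Hc_le_bits[OF fS Qnn' card_restrict_image[OF fIA(2)], where Y=B0] Qsum' unfolding TA_def by simp
  have ccn: "card (\<I> - \<A>) + card \<A> = card \<I>"
    using card_Diff_subset[OF fIA(2) AI] card_mono[OF fI AI] by simp
  have cc: "real (card (\<I> - \<A>)) + real (card \<A>) = real (card \<I>)"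
    by (metis ccn of_nat_add)
  have MIle: "mutinf Q S Wv (\<lambda>\<omega>. (TA \<omega>, B0 \<omega>)) \<le> real (card \<I>) - Hc Q S R B0"
    using dec hW hA cc by linarith
  have MI0: "0 \<le> mutinf Q S Wv (\<lambda>\<omega>. (TA \<omega>, B0 \<omega>))" by (rule mi_nonneg[OF fS Qnn' Qsum'])

  have Nb: "N powr \<beta> \<le> N" using powr_mono[of \<beta> 1 N] b1 N1 by simp
  have a1: "4 * \<delta> * real (card \<I>) \<le> 4 * \<delta> * N" using cI d0 by simp
  have a2: "\<epsilon> * real (card \<I>) \<le> (N * \<delta>) * N" using ele cI e0 by (intro mult_mono) auto
  have a3: "\<epsilon> / ln 2 \<le> 2 * (N * \<delta>)" using div_ln2_le[OF e0] ele by linarith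
  have a4: "\<epsilon> * (N powr \<beta>) \<le> (N * \<delta>) * N" using ele Nb e0 by (intro mult_mono) auto
  have a5: "\<delta> / ln 2 \<le> 2 * \<delta>" using div_ln2_le d0 by simp
  have MIb: "mutinf Q S Wv (\<lambda>\<omega>. (TA \<omega>, B0 \<omega>)) \<le> \<delta> * (2 * N^2 + 6 * N + 2)"
  proof -
    have "mutinf Q S Wv (\<lambda>\<omega>. (TA \<omega>, B0 \<omega>)) \<le> 4 * \<delta> * real (card \<I>) + \<epsilon> * real (card \<I>) + \<epsilon> / ln 2 + \<epsilon> * (N powr \<beta>) + \<delta> / ln 2"
      using MIle Qside by (rule lin2)
    also have "\<dots> \<le> 4 * \<delta> * N + (N * \<delta>) * N + 2 * (N * \<delta>) + (N * \<delta>) * N + 2 * \<delta>"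
      using a1 a2 a3 a4 a5 by linarith
    also have "\<dots> = \<delta> * (2 * N^2 + 6 * N + 2)" by (simp add: algebra_simps power2_eq_square)
    finally show ?thesis .
  qed
  have poly: "2 * N^2 + 6 * N + 2 \<le> 10 * N^3"
  proof -
    have "1 \<le> N^2" using N1 by simp
    then have "N * 1 \<le> N * N^2" using N1 by (intro mult_left_mono) auto
    then have "N \<le> N^3" by (simp add: power2_eq_square power3_eq_cube)
    moreover have "N^2 \<le> N^3" using N1 by (simp add: power_increasing)
    moreover have "1 \<le> N^3" using N1 by simp
    ultimately show ?thesis by linarith
  qed
  have fin: "mutinf Q S Wv (\<lambda>\<omega>. (TA \<omega>, B0 \<omega>)) \<le> 10 * N^3 * \<delta>"
  proof -
    have "\<delta> * (2 * N^2 + 6 * N + 2) \<le> \<delta> * (10 * N^3)" using poly d0 by (intro mult_left_mono) auto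
    then show ?thesis using MIb by (intro lin3)
  qed
  have "\<bar>mutinf Q S Wv (\<lambda>\<omega>. (TA \<omega>, B0 \<omega>))\<bar> \<le> 10 * N^3 * \<delta>" using fin MI0 by simp
  then show ?thesis unfolding S_def Wv_def TA_def B0_def N_def \<delta>_def by simp
qed

theorem lemma3:
  "\<forall>k::nat. \<exists>C::real. \<forall>\<beta>::real. \<forall>(X::'x set) (Z::'z set) (p :: bool \<times> bool \<times> 'x \<times> 'z \<Rightarrow> real).
     0 < \<beta> \<and> \<beta> < 1/2 \<and> finite X \<and> finite Z \<and> card Z = k \<and>
     (\<forall>w. p w \<ge> 0) \<and> (\<forall>w. p w \<noteq> 0 \<longrightarrow> w \<in> UNIV \<times> UNIV \<times> X \<times> Z) \<and>
     (\<Sum>w\<in>UNIV \<times> UNIV \<times> X \<times> Z. p w) = 1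
     \<longrightarrow> (\<exists>N0::nat. \<forall>n (Q :: (bool \<times> bool \<times> 'x \<times> 'z) list \<Rightarrow> real) \<I> \<A>.
           2 ^ n \<ge> N0 \<and>
           (\<forall>\<omega>\<in>outcomes (2 ^ n) X Z. Q \<omega> \<ge> 0) \<and>
           (\<Sum>\<omega>\<in>outcomes (2 ^ n) X Z. Q \<omega>) = 1 \<and>
           (\<Sum>\<omega>\<in>outcomes (2 ^ n) X Z. \<bar>iid p \<omega> - Q \<omega>\<bar>)
              \<le> 2 * real (2 ^ n) * 2 powr (- (real (2 ^ n) powr \<beta>)) \<and>
           \<I> \<subseteq> Hset \<beta> n p X Z \<and> \<A> \<subseteq> \<I>
           \<longrightarrow> \<bar>mutinf Q (outcomes (2 ^ n) X Z)
                  (\<lambda>\<omega>. restrict (Tv n \<omega>) (\<I> - \<A>))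
                  (\<lambda>\<omega>. (restrict (Tv n \<omega>) \<A>, Uv \<omega>, Zv \<omega>))\<bar>
               \<le> C * real (2 ^ n) ^ 3 * 2 powr (- (real (2 ^ n) powr \<beta>)))"
  by (intro allI exI[of _ "10::real"] impI exI[of _ "0::nat"]) (elim conjE; rule core; assumption)

end
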